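(* Let $1\le d<N$, let $w\in I_{d,N}$ with $w\ne(1,\dots,d)$, and let $T\subseteq GL_N$ be the maximal torus of diagonal matrices, so that $(w,d,N,T)$ is a stable Levi–Schubert quadruple. Let $(\overline w,\overline d,\overline N,\overline T)$ be its reduction. Then $(w,d,N,T)$ is spherical (i.e. $X(w)$ has a dense open $T$-orbit) if and only if $\overline w=(\overline N)$ (with $\overline d=1$) or $\overline d\ge2$ and $\overline w=(2,3,\dots,\overline d,\overline N)$.
   Context: Work over $\mathbb{C}$. $G_{d,N}$ is the Grassmannian of $d$-planes in $\mathbb{C}^N$; $B\subset GL_N$ upper triangular, $T\subset B$ the diagonal matrices. $I_{d,N}$ is the set of sequences $(i_1<\dots<i_d)$ in $\{1,\dots,N\}$. For $w=(\ell_1,\dots,\ell_d)\in I_{d,N}$, $X(w)$ is the closure of $B\cdot[e_{\ell_1}\wedge\dots\wedge e_{\ell_d}]$. A Levi–Schubert quadruple $(w,d,N,L)$ with $L$ a standard (block diagonal) Levi subgroup of $GL_N$ is stable if $X(w)$ is $L$-stable under left multiplication, and then spherical if $X(w)$ has a dense open orbit of a Borel subgroup of $L$; $T$ is the Levi with all blocks of size $1$. Reduction: let $p\ge0$ be maximal with $\ell_i=i$ for $i\le p$; then $\overline w=(\ell_{p+1}-p,\dots,\ell_d-p)$, $\overline d=d-p$, $\overline N=\ell_d-p$, and $\overline T$ is the diagonal torus of $GL_{\overline N}$ (image of $T$ under taking the principal submatrix on rows and columns $p+1,\dots,\ell_d$). *)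

theory Defs
  imports "HOL-Analysis.Analysis"
begin

text \<open>Coordinates are indexed by 1..N. Vectors of C^N are functions nat => complex
  vanishing outside {1..N}; N x N matrices are functions nat => nat => complex
  vanishing outside {1..N} x {1..N}; d x N "frame" matrices vanish outside {1..d} x {1..N}.\<close>

definition sq_mat :: "nat \<Rightarrow> (nat \<Rightarrow> nat \<Rightarrow> complex) set" where
  "sq_mat N = {g. \<forall>j k. \<not> (1 \<le> j \<and> j \<le> N \<and> 1 \<le> k \<and> k \<le> N) \<longrightarrow> g j k = 0}"

definition mat_mult :: "nat \<Rightarrow> (nat \<Rightarrow> nat \<Rightarrow> complex) \<Rightarrow> (nat \<Rightarrow> nat \<Rightarrow> complex) \<Rightarrow> (nat \<Rightarrow> nat \<Rightarrow> complex)" where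
  "mat_mult N g h = (\<lambda>j k. \<Sum>m=1..N. g j m * h m k)"

definition id_mat :: "nat \<Rightarrow> nat \<Rightarrow> nat \<Rightarrow> complex" where
  "id_mat N = (\<lambda>j k. if j = k \<and> 1 \<le> j \<and> j \<le> N then 1 else 0)"

definition GL :: "nat \<Rightarrow> (nat \<Rightarrow> nat \<Rightarrow> complex) set" where
  "GL N = {g \<in> sq_mat N. \<exists>h \<in> sq_mat N. mat_mult N g h = id_mat N \<and> mat_mult N h g = id_mat N}"

definition borel :: "nat \<Rightarrow> (nat \<Rightarrow> nat \<Rightarrow> complex) set" where
  "borel N = {g \<in> GL N. \<forall>j k. k < j \<longrightarrow> g j k = 0}"

definition torus :: "nat \<Rightarrow> (nat \<Rightarrow> nat \<Rightarrow> complex) set" where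
  "torus N = {g \<in> GL N. \<forall>j k. j \<noteq> k \<longrightarrow> g j k = 0}"

definition mat_act :: "nat \<Rightarrow> (nat \<Rightarrow> nat \<Rightarrow> complex) \<Rightarrow> (nat \<Rightarrow> complex) set \<Rightarrow> (nat \<Rightarrow> complex) set" where
  "mat_act N g V = (\<lambda>v. \<lambda>j. \<Sum>k=1..N. g j k * v k) ` V"

definition frames :: "nat \<Rightarrow> nat \<Rightarrow> (nat \<Rightarrow> nat \<Rightarrow> complex) set" where
  "frames d N = {A. (\<forall>i j. \<not> (1 \<le> i \<and> i \<le> d \<and> 1 \<le> j \<and> j \<le> N) \<longrightarrow> A i j = 0) \<and>
      (\<forall>c::nat \<Rightarrow> complex. (\<forall>j. (\<Sum>i=1..d. c i * A i j) = 0) \<longrightarrow> (\<forall>i\<in>{1..d}. c i = 0))}"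

definition rowsp :: "nat \<Rightarrow> (nat \<Rightarrow> nat \<Rightarrow> complex) \<Rightarrow> (nat \<Rightarrow> complex) set" where
  "rowsp d A = {(\<lambda>j. \<Sum>i=1..d. c i * A i j) | c. True}"

definition grass :: "nat \<Rightarrow> nat \<Rightarrow> (nat \<Rightarrow> complex) set set" where
  "grass d N = rowsp d ` frames d N"

definition grass_top :: "nat \<Rightarrow> nat \<Rightarrow> (nat \<Rightarrow> complex) set topology" where
  "grass_top d N = topology (\<lambda>U. U \<subseteq> grass d N \<and>
      openin (top_of_set (frames d N)) {A \<in> frames d N. rowsp d A \<in> U})"

definition I_seq :: "nat \<Rightarrow> nat \<Rightarrow> nat list set" where
  "I_seq d N = {w. length w = d \<and> sorted_wrt (<) w \<and> (\<forall>l\<in>set w. 1 \<le> l \<and> l \<le> N)}"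

definition e_pt :: "nat list \<Rightarrow> (nat \<Rightarrow> complex) set" where
  "e_pt w = rowsp (length w) (\<lambda>i j. if 1 \<le> i \<and> i \<le> length w \<and> j = w ! (i - 1) then 1 else 0)"

definition schubert :: "nat list \<Rightarrow> nat \<Rightarrow> nat \<Rightarrow> (nat \<Rightarrow> complex) set set" where
  "schubert w d N = (grass_top d N) closure_of ((\<lambda>g. mat_act N g (e_pt w)) ` borel N)"

definition T_spherical :: "nat list \<Rightarrow> nat \<Rightarrow> nat \<Rightarrow> bool" where
  "T_spherical w d N = (\<exists>V \<in> schubert w d N.
      let Orb = (\<lambda>t. mat_act N t V) ` torus N in
      openin (subtopology (grass_top d N) (schubert w d N)) Orb \<and>
      schubert w d N \<subseteq> (grass_top d N) closure_of Orb)"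

definition red_p :: "nat list \<Rightarrow> nat" where
  "red_p w = (GREATEST p. p \<le> length w \<and> (\<forall>i<p. w ! i = i + 1))"

definition red_w :: "nat list \<Rightarrow> nat list" where
  "red_w w = map (\<lambda>l. l - red_p w) (drop (red_p w) w)"

definition red_d :: "nat list \<Rightarrow> nat" where
  "red_d w = length w - red_p w"

definition red_N :: "nat list \<Rightarrow> nat" where
  "red_N w = last w - red_p w"

end

theory Submission
  imports Defs "Jordan_Normal_Form.Determinant"
begin

definition lc :: "nat \<Rightarrow> (nat \<Rightarrow> complex) \<Rightarrow> (nat \<Rightarrow> nat \<Rightarrow> complex) \<Rightarrow> nat \<Rightarrow> complex" where
  "lc d c A = (\<lambda>j. \<Sum>i=1..d. c i * A i j)"

definition mm :: "nat \<Rightarrow> (nat \<Rightarrow> nat \<Rightarrow> complex) \<Rightarrow> (nat \<Rightarrow> nat \<Rightarrow> complex) \<Rightarrow> nat \<Rightarrow> nat \<Rightarrow> complex" where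
  "mm d M A = (\<lambda>i j. \<Sum>k=1..d. M i k * A k j)"

definition subm :: "nat \<Rightarrow> (nat \<Rightarrow> nat \<Rightarrow> complex) \<Rightarrow> nat list \<Rightarrow> complex mat" where
  "subm d A I = mat d d (\<lambda>(a,b). A (Suc a) (I!b))"

definition pl :: "nat \<Rightarrow> (nat \<Rightarrow> nat \<Rightarrow> complex) \<Rightarrow> nat list \<Rightarrow> complex" where
  "pl d A I = det (subm d A I)"

definition toM :: "nat \<Rightarrow> (nat \<Rightarrow> nat \<Rightarrow> complex) \<Rightarrow> complex mat" where
  "toM d M = mat d d (\<lambda>(a,b). M (Suc a) (Suc b))"

lemma rowsp_lc: "rowsp d A = {lc d c A | c. True}"
  unfolding rowsp_def lc_def by simp

lemma sum_1d: "(\<Sum>k=Suc 0..d. f k) = (\<Sum>k=0..<d. f (Suc k))"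
  by (induct d) auto

lemma lc_mm: "lc d c (mm d M A) = lc d (\<lambda>k. \<Sum>i=1..d. c i * M i k) A"
  unfolding lc_def mm_def
  by (auto simp: sum_distrib_left sum_distrib_right mult.assoc intro!: ext sum.swap)

lemma mm_assoc: "mm d M (mm d M' A) = mm d (mm d M M') A"
  unfolding mm_def
  by (auto simp: sum_distrib_left sum_distrib_right mult.assoc intro!: ext sum.swap)

lemma rowsp_mm_sub: "rowsp d (mm d M A) \<subseteq> rowsp d A"
  unfolding rowsp_lc lc_mm by blast

lemma lc_cong: "(\<And>i. i \<in> {1..d} \<Longrightarrow> A i = B i) \<Longrightarrow> lc d c A = lc d c B"
  unfolding lc_def by (auto intro!: ext sum.cong)

lemma rowsp_cong: "(\<And>i. i \<in> {1..d} \<Longrightarrow> A i = B i) \<Longrightarrow> rowsp d A = rowsp d B"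
  unfolding rowsp_lc using lc_cong by metis

lemma mm_cong: "(\<And>i. i \<in> {1..d} \<Longrightarrow> A i = B i) \<Longrightarrow> mm d M A = mm d M B"
  unfolding mm_def by (auto intro!: ext sum.cong)

lemma row_in_rowsp: assumes "i \<in> {1..d}" shows "A i \<in> rowsp d A"
proof -
  have "lc d (\<lambda>k. if k = i then 1 else 0) A = A i"
  proof
    fix j
    have "(\<Sum>k=1..d. (if k = i then 1 else 0) * A k j) = (\<Sum>k=1..d. if k = i then A k j else 0)"
      by (rule sum.cong) auto
    also have "\<dots> = A i j" using assms by (simp add: sum.delta)
    finally show "lc d (\<lambda>k. if k = i then 1 else 0) A j = A i j" unfolding lc_def .
  qed
  then show ?thesis unfolding rowsp_lc by (metis (mono_tags, lifting) mem_Collect_eq)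
qed

lemma rowsp_sub_mm: assumes "rowsp d A' \<subseteq> rowsp d A"
  shows "\<exists>M. \<forall>i\<in>{1..d}. A' i = mm d M A i"
proof -
  have "\<forall>i\<in>{1..d}. \<exists>c. A' i = lc d c A"
    using row_in_rowsp[of _ d A'] assms unfolding rowsp_lc by blast
  then obtain M where "\<forall>i\<in>{1..d}. A' i = lc d (M i) A" by metis
  then show ?thesis unfolding lc_def mm_def by (intro exI[of _ M]) auto
qed

lemma subm_carrier[simp]: "subm d A I \<in> carrier_mat d d" unfolding subm_def by simp
lemma toM_carrier[simp]: "toM d M \<in> carrier_mat d d" unfolding toM_def by simp

lemma subm_mm: "subm d (mm d M A) I = toM d M * subm d A I"
  apply (rule eq_matI)
  apply (auto simp: subm_def toM_def mm_def scalar_prod_def row_def col_def sum_1d)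
  done

lemma toM_mm: "toM d (mm d M M') = toM d M * toM d M'"
  apply (rule eq_matI)
  apply (auto simp: toM_def mm_def scalar_prod_def row_def col_def sum_1d)
  done

lemma pl_mm: "pl d (mm d M A) I = det (toM d M) * pl d A I"
  unfolding pl_def subm_mm by (rule det_mult[OF toM_carrier subm_carrier])

lemma pl_cong: "(\<And>i. i \<in> {1..d} \<Longrightarrow> A i = B i) \<Longrightarrow> pl d A I = pl d B I"
  unfolding pl_def subm_def by (auto intro!: arg_cong[where f=det] eq_matI)


lemma sum_delta1: "(i::nat) \<in> {1..d} \<Longrightarrow> (\<Sum>k=1..d. (if i = k then 1 else 0) * f k) = (f i :: complex)"
proof -
  assume i: "i \<in> {1..d}"
  have "(\<Sum>k=1..d. (if i = k then 1 else 0) * f k) = (\<Sum>k=1..d. if i = k then f k else 0)"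
    by (rule sum.cong) auto
  also have "\<dots> = f i" by (simp only: sum.delta'[OF finite_atLeastAtMost]) (use i in simp)
  finally show ?thesis .
qed

lemma toM_index[simp]: "i < d \<Longrightarrow> k < d \<Longrightarrow> toM d M $$ (i,k) = M (Suc i) (Suc k)"
  unfolding toM_def by simp

lemma toM_one: assumes "toM d P = 1\<^sub>m d" "i \<in> {1..d}" "k \<in> {1..d}"
  shows "P i k = (if i = k then 1 else 0)"
proof -
  have "toM d P $$ (i-1, k-1) = 1\<^sub>m d $$ (i-1,k-1)" using assms(1) by simp
  then show ?thesis using assms(2,3) by (auto split: if_splits)
qed

lemma mm_delta: assumes "\<forall>i\<in>{1..d}. \<forall>k\<in>{1..d}. P i k = (if i = k then 1 else 0)" "i \<in> {1..d}"
  shows "mm d P A i = A i"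
proof
  fix j
  have "mm d P A i j = (\<Sum>k=1..d. (if i = k then 1 else 0) * A k j)"
    unfolding mm_def using assms by (auto intro!: sum.cong)
  also have "\<dots> = A i j" using sum_delta1[OF assms(2)] .
  finally show "mm d P A i j = A i j" .
qed

lemma frame_of_pl:
  assumes box: "\<And>i j. \<not>(1\<le>i \<and> i\<le>d \<and> 1\<le>j \<and> j\<le>N) \<Longrightarrow> A i j = 0" and nz: "pl d A I \<noteq> 0"
  shows "A \<in> frames d N"
proof -
  have "\<forall>i\<in>{1..d}. c i = 0" if h: "\<forall>j. (\<Sum>i=1..d. c i * A i j) = 0" for c
  proof -
    let ?S = "subm d A I"
    define v where "v = vec d (\<lambda>a. c (Suc a))"
    have "transpose_mat ?S *\<^sub>v v = 0\<^sub>v d"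
    proof (rule eq_vecI)
      fix b assume "b < dim_vec (0\<^sub>v d :: complex vec)"
      then have b: "b < d" by simp
      have "(transpose_mat ?S *\<^sub>v v) $ b = (\<Sum>a=0..<d. A (Suc a) (I!b) * c (Suc a))"
        using b by (simp add: subm_def v_def scalar_prod_def row_def)
      also have "\<dots> = (\<Sum>i=Suc 0..d. c i * A i (I!b))" by (simp add: sum_1d mult.commute)
      also have "\<dots> = 0" using h by simp
      finally show "(transpose_mat ?S *\<^sub>v v) $ b = 0\<^sub>v d $ b" using b by simp
    qed (simp add: subm_def)
    moreover have "det (transpose_mat ?S) \<noteq> 0" using nz det_transpose[OF subm_carrier] unfolding pl_def by simp
    moreover have "transpose_mat ?S \<in> carrier_mat d d" by (simp add: subm_def)
    moreover have "v \<in> carrier_vec d" by (simp add: v_def)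
    ultimately have "v = 0\<^sub>v d" using det_0_iff_vec_prod_zero_field[of "transpose_mat ?S" d] by blast
    show ?thesis
    proof
      fix i assume i: "i \<in> {1..d}"
      have "i - 1 < d" using i by auto
      then have "v $ (i - 1) = 0" using \<open>v = 0\<^sub>v d\<close> by simp
      then show "c i = 0" using i \<open>i - 1 < d\<close> by (simp add: v_def)
    qed
  qed
  then show ?thesis using box unfolding frames_def by auto
qed

lemma pl_same_rowsp:
  assumes A: "A \<in> frames d N" and A': "A' \<in> frames d N" and eqr: "rowsp d A = rowsp d A'"
  shows "\<exists>c. c \<noteq> 0 \<and> (\<forall>I. pl d A' I = c * pl d A I)"
proof -
  obtain M where M: "\<forall>i\<in>{1..d}. A' i = mm d M A i" using rowsp_sub_mm eqr by blast
  obtain M' where M': "\<forall>i\<in>{1..d}. A i = mm d M' A' i" using rowsp_sub_mm eqr by blast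
  have "mm d M' A' = mm d M' (mm d M A)" by (rule mm_cong) (use M in auto)
  hence eq: "\<forall>i\<in>{1..d}. A i = mm d (mm d M' M) A i" using M' mm_assoc by metis
  let ?P = "mm d M' M"
  have P: "?P i k = (if i = k then 1 else 0)" if ik: "i\<in>{1..d}" "k\<in>{1..d}" for i k
  proof -
    have "\<forall>j. (\<Sum>k=1..d. (?P i k - (if i = k then 1 else 0)) * A k j) = 0"
    proof
      fix j
      have "(\<Sum>k=1..d. (?P i k - (if i = k then 1 else 0)) * A k j) = (\<Sum>k=1..d. ?P i k * A k j) - (\<Sum>k=1..d. (if i = k then 1 else 0) * A k j)"
        by (simp add: algebra_simps sum_subtractf)
      also have "(\<Sum>k=1..d. ?P i k * A k j) = A i j" using eq ik(1) unfolding mm_def by metis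
      also have "(\<Sum>k=1..d. (if i = k then 1 else 0) * A k j) = A i j" using sum_delta1[OF ik(1)] .
      finally show "(\<Sum>k=1..d. (?P i k - (if i = k then 1 else 0)) * A k j) = 0" by simp
    qed
    moreover have fr: "\<forall>c. (\<forall>j. (\<Sum>i=1..d. c i * A i j) = 0) \<longrightarrow> (\<forall>i\<in>{1..d}. c i = 0)"
      using A unfolding frames_def by blast
    ultimately have "\<forall>k\<in>{1..d}. ?P i k - (if i = k then 1 else 0) = 0"
      using fr[rule_format, of "\<lambda>k. ?P i k - (if i = k then 1 else 0)"] by blast
    then show ?thesis using ik by auto
  qed
  have "toM d ?P = 1\<^sub>m d" by (rule eq_matI) (auto simp: P toM_def)
  hence "det (toM d M') * det (toM d M) = 1" using toM_mm det_mult[OF toM_carrier toM_carrier] det_one by metis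
  hence "det (toM d M) \<noteq> 0" by auto
  moreover have "pl d A' I = det (toM d M) * pl d A I" for I
    using pl_cong[of d A' "mm d M A" I] M pl_mm by auto
  ultimately show ?thesis by blast
qed

lemma prod_list_upt: "prod_list (map f [0..<d]) = (\<Prod>i=0..<d. f i)"
  by (induct d) auto

lemma pl_scale: "pl d (\<lambda>i j. A i j * t j) I = pl d A I * (\<Prod>b=0..<d. t (I!b))"
proof -
  define D where "D = mat d d (\<lambda>(a,b). if a = b then t (I!a) else (0::complex))"
  have D: "D \<in> carrier_mat d d" by (simp add: D_def)
  have "subm d (\<lambda>i j. A i j * t j) I = subm d A I * D"
  proof (rule eq_matI)
    fix a b assume ab: "a < dim_row (subm d A I * D)" "b < dim_col (subm d A I * D)"
    then have a: "a < d" and b: "b < d" by (auto simp: D_def subm_def)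
    have "(subm d A I * D) $$ (a,b) = (\<Sum>k=0..<d. A (Suc a) (I!k) * (if k = b then t (I!k) else 0))"
      using a b by (auto simp: subm_def D_def scalar_prod_def row_def col_def intro!: sum.cong)
    also have "\<dots> = (\<Sum>k=0..<d. if k = b then A (Suc a) (I!k) * t (I!k) else 0)"
      by (rule sum.cong) auto
    also have "\<dots> = A (Suc a) (I!b) * t (I!b)" using b by (simp add: sum.delta')
    finally show "subm d (\<lambda>i j. A i j * t j) I $$ (a,b) = (subm d A I * D) $$ (a,b)"
      using a b by (simp add: subm_def)
  qed (auto simp: subm_def D_def)
  moreover have "det D = (\<Prod>b=0..<d. t (I!b))"
    using det_upper_triangular[OF _ D] by (simp add: upper_triangular_def D_def diag_mat_def prod_list_upt)
  ultimately show ?thesis unfolding pl_def using det_mult[OF subm_carrier D] by simp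
qed

lemma pl_reduced:
  assumes red: "\<forall>i k. i<d \<longrightarrow> k<d \<longrightarrow> R (Suc i) (w!k) = (if i = k then 1 else 0)"
    and i: "i < d" and len: "length w = d"
  shows "pl d R (w[i:=j]) = R (Suc i) j"
proof -
  define x where "x = vec d (\<lambda>a. R (Suc a) j)"
  have "subm d R (w[i:=j]) = replace_col (1\<^sub>m d) (1\<^sub>m d *\<^sub>v x) i"
    by (rule eq_matI) (auto simp: subm_def replace_col_def x_def red len nth_list_update)
  then show ?thesis unfolding pl_def using cramer_lemma_mat[of "1\<^sub>m d" d x i] i by (simp add: x_def)
qed

lemma pl_reduced_w:
  assumes red: "\<forall>i k. i<d \<longrightarrow> k<d \<longrightarrow> R (Suc i) (w!k) = (if i = k then 1 else 0)"
  shows "pl d R w = 1"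
proof -
  have "subm d R w = 1\<^sub>m d"
    by (rule eq_matI) (auto simp: subm_def red)
  then show ?thesis unfolding pl_def by simp
qed


lemma chart:
  assumes A: "A \<in> frames d N" and nz: "pl d A w \<noteq> 0"
  shows "\<exists>R. rowsp d R = rowsp d A \<and> (\<forall>i k. i<d \<longrightarrow> k<d \<longrightarrow> R (Suc i) (w!k) = (if i = k then 1 else 0))
     \<and> (\<forall>I. pl d R I = pl d A I / pl d A w) \<and> (\<forall>i j. \<not>(1\<le>i \<and> i\<le>d \<and> 1\<le>j \<and> j\<le>N) \<longrightarrow> R i j = 0)"
proof -
  let ?S = "subm d A w"
  let ?c = "pl d A w"
  define B where "B = (1 / ?c) \<cdot>\<^sub>m adj_mat ?S"
  have adjc: "adj_mat ?S \<in> carrier_mat d d" using adj_mat(1)[OF subm_carrier] .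
  have Bc: "B \<in> carrier_mat d d" using adjc by (simp add: B_def)
  have inv1: "(1 / ?c) \<cdot>\<^sub>m (?c \<cdot>\<^sub>m 1\<^sub>m d) = 1\<^sub>m d"
    by (rule eq_matI) (use nz in auto)
  have BS: "B * ?S = 1\<^sub>m d"
    unfolding B_def using mult_smult_assoc_mat[OF adjc subm_carrier] adj_mat(3)[OF subm_carrier] inv1
    unfolding pl_def by simp
  have SB: "?S * B = 1\<^sub>m d"
    unfolding B_def using mult_smult_distrib[OF subm_carrier adjc] adj_mat(2)[OF subm_carrier] inv1
    unfolding pl_def by simp
  define Minv where "Minv i k = (if 1\<le>i \<and> i\<le>d \<and> 1\<le>k \<and> k\<le>d then B $$ (i-1,k-1) else 0)" for i k
  define Mf where "Mf i k = (if 1\<le>i \<and> i\<le>d \<and> 1\<le>k \<and> k\<le>d then ?S $$ (i-1,k-1) else 0)" for i k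
  have tMinv: "toM d Minv = B" by (rule eq_matI) (use Bc in \<open>auto simp: Minv_def toM_def\<close>)
  have tMf: "toM d Mf = ?S" by (rule eq_matI) (auto simp: Mf_def toM_def subm_def)
  define R where "R = mm d Minv A"
  have "toM d (mm d Mf Minv) = 1\<^sub>m d" by (simp add: toM_mm tMinv tMf SB)
  then have P: "\<forall>i\<in>{1..d}. \<forall>k\<in>{1..d}. mm d Mf Minv i k = (if i = k then 1 else 0)"
    using toM_one by blast
  have bck: "mm d Mf R i = A i" if "i \<in> {1..d}" for i
    unfolding R_def mm_assoc using mm_delta[OF P that] .
  have "rowsp d A = rowsp d (mm d Mf R)" by (rule rowsp_cong) (use bck in auto)
  also have "\<dots> \<subseteq> rowsp d R" by (rule rowsp_mm_sub)
  finally have r1: "rowsp d A \<subseteq> rowsp d R" .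
  have r2: "rowsp d R \<subseteq> rowsp d A" unfolding R_def by (rule rowsp_mm_sub)
  have sR: "subm d R w = 1\<^sub>m d" unfolding R_def subm_mm tMinv BS ..
  have red: "\<forall>i k. i<d \<longrightarrow> k<d \<longrightarrow> R (Suc i) (w!k) = (if i = k then 1 else 0)"
  proof (intro allI impI)
    fix i k assume "i < d" "k < d"
    then show "R (Suc i) (w!k) = (if i = k then 1 else 0)"
      using arg_cong[OF sR, of "\<lambda>M. M $$ (i,k)"] by (simp add: subm_def)
  qed
  have detB: "det B * ?c = 1"
    using det_mult[OF Bc subm_carrier[of d A w]] BS det_one[of d] unfolding pl_def by simp
  have plR: "pl d R I = pl d A I / ?c" for I
  proof -
    have "pl d R I = det B * pl d A I" unfolding R_def pl_mm tMinv ..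
    then show ?thesis using detB nz by (simp add: field_simps)
  qed
  have box: "\<forall>i j. \<not>(1\<le>i \<and> i\<le>d \<and> 1\<le>j \<and> j\<le>N) \<longrightarrow> R i j = 0"
  proof (intro allI impI)
    fix i j assume h: "\<not>(1\<le>i \<and> i\<le>d \<and> 1\<le>j \<and> j\<le>N)"
    have Ab: "\<forall>i j. \<not>(1\<le>i \<and> i\<le>d \<and> 1\<le>j \<and> j\<le>N) \<longrightarrow> A i j = 0" using A unfolding frames_def by blast
    show "R i j = 0" unfolding R_def mm_def
    proof (rule sum.neutral, intro ballI)
      fix k assume k: "k \<in> {1..d}"
      show "Minv i k * A k j = 0" using h k Ab by (auto simp: Minv_def)
    qed
  qed
  show ?thesis using r1 r2 red plR box by (intro exI[of _ R]) auto
qed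

lemma pl_leibniz: "pl d A I = (\<Sum>p\<in>{p. p permutes {0..<d}}. signof p * (\<Prod>i=0..<d. A (Suc i) (I ! p i)))"
  unfolding pl_def det_def'[OF subm_carrier]
proof (rule sum.cong[OF refl])
  fix p assume "p \<in> {p. p permutes {0..<d}}"
  then have p: "p permutes {0..<d}" by simp
  have "subm d A I $$ (i, p i) = A (Suc i) (I ! p i)" if "i \<in> {0..<d}" for i
  proof -
    have "p i < d" using permutes_in_image[OF p, of i] that by simp
    then show ?thesis using that by (simp add: subm_def)
  qed
  then show "signof p * (\<Prod>i=0..<d. subm d A I $$ (i, p i)) = signof p * (\<Prod>i=0..<d. A (Suc i) (I ! p i))"
    by (metis (mono_tags, lifting) prod.cong)
qed

lemma cont_entry: "continuous_on UNIV (\<lambda>A::nat\<Rightarrow>nat\<Rightarrow>complex. A r c)"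
proof -
  have "continuous_on UNIV (\<lambda>A::nat\<Rightarrow>nat\<Rightarrow>complex. A r)" by (rule continuous_on_product_coordinates)
  then show ?thesis by (rule continuous_on_product_then_coordinatewise)
qed

lemma cont_pl: "continuous_on UNIV (\<lambda>A. pl d A I)"
proof -
  have "continuous_on UNIV (\<lambda>A::nat\<Rightarrow>nat\<Rightarrow>complex. (\<Sum>p\<in>{p. p permutes {0..<d}}. signof p * (\<Prod>i=0..<d. A (Suc i) (I ! p i))))"
    by (intro continuous_on_sum continuous_on_mult continuous_on_const continuous_on_prod cont_entry)
  then show ?thesis unfolding pl_leibniz .
qed

definition scinv :: "((nat list \<Rightarrow> complex) \<Rightarrow> bool) \<Rightarrow> bool" where
  "scinv P = (\<forall>f c. P f \<longrightarrow> c \<noteq> 0 \<longrightarrow> P (\<lambda>I. c * f I))"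

lemma sat_pl:
  assumes A: "A \<in> frames d N" and A': "A' \<in> frames d N" and eqr: "rowsp d A = rowsp d A'"
    and P: "scinv P" and PA: "P (pl d A)"
  shows "P (pl d A')"
proof -
  obtain c where "c \<noteq> 0" "\<forall>I. pl d A' I = c * pl d A I" using pl_same_rowsp[OF A A' eqr] by blast
  then have "pl d A' = (\<lambda>I. c * pl d A I)" by auto
  then show ?thesis using P PA \<open>c \<noteq> 0\<close> unfolding scinv_def by auto
qed

lemma istop_grass: "istopology (\<lambda>U. U \<subseteq> grass d N \<and> openin (top_of_set (frames d N)) {A \<in> frames d N. rowsp d A \<in> U})"
proof -
  define L where "L = (\<lambda>U. U \<subseteq> grass d N \<and> openin (top_of_set (frames d N)) {A \<in> frames d N. rowsp d A \<in> U})"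
  have 1: "L (S \<inter> T)" if S: "L S" and T: "L T" for S T
  proof -
    have "{A \<in> frames d N. rowsp d A \<in> S \<inter> T} = {A \<in> frames d N. rowsp d A \<in> S} \<inter> {A \<in> frames d N. rowsp d A \<in> T}"
      by auto
    then show ?thesis using S T unfolding L_def by (auto intro: openin_Int)
  qed
  have 2: "L (\<Union>K)" if K: "\<forall>S\<in>K. L S" for K
  proof -
    have "{A \<in> frames d N. rowsp d A \<in> \<Union>K} = \<Union>((\<lambda>S. {A \<in> frames d N. rowsp d A \<in> S}) ` K)"
      by auto
    moreover have "openin (top_of_set (frames d N)) (\<Union>((\<lambda>S. {A \<in> frames d N. rowsp d A \<in> S}) ` K))"
      using K unfolding L_def by (intro openin_Union) auto
    ultimately show ?thesis using K unfolding L_def by auto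
  qed
  have "istopology L" unfolding istopology_def using 1 2 by (intro conjI allI impI) auto
  then show ?thesis unfolding L_def .
qed

lemma openin_grass: "openin (grass_top d N) U \<longleftrightarrow> U \<subseteq> grass d N \<and> openin (top_of_set (frames d N)) {A \<in> frames d N. rowsp d A \<in> U}"
proof -
  have "openin (grass_top d N) = (\<lambda>U. U \<subseteq> grass d N \<and> openin (top_of_set (frames d N)) {A \<in> frames d N. rowsp d A \<in> U})"
    unfolding grass_top_def by (rule topology_inverse'[OF istop_grass])
  then show ?thesis by simp
qed

lemma topspace_grass: "topspace (grass_top d N) = grass d N"
proof
  show "topspace (grass_top d N) \<subseteq> grass d N" unfolding topspace_def openin_grass by auto
  have "{A \<in> frames d N. rowsp d A \<in> grass d N} = frames d N" unfolding grass_def by auto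
  then have "openin (grass_top d N) (grass d N)" unfolding openin_grass by auto
  then show "grass d N \<subseteq> topspace (grass_top d N)" by (rule openin_subset)
qed

lemma rowsp_grass: "A \<in> frames d N \<Longrightarrow> rowsp d A \<in> grass d N"
  unfolding grass_def by auto

lemma open_pl_set:
  assumes op: "open {A. P (pl d A)}" and P: "scinv P"
  shows "openin (grass_top d N) (rowsp d ` {A \<in> frames d N. P (pl d A)})"
proof -
  have "{A \<in> frames d N. rowsp d A \<in> rowsp d ` {A \<in> frames d N. P (pl d A)}} = frames d N \<inter> {A. P (pl d A)}"
  proof (safe)
    fix A A' assume "A \<in> frames d N" "A' \<in> frames d N" "P (pl d A')" "rowsp d A = rowsp d A'"
    then show "P (pl d A)" using sat_pl[of A' d N A P] P by auto
  qed auto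
  moreover have "openin (top_of_set (frames d N)) (frames d N \<inter> {A. P (pl d A)})"
    using op by (auto intro: openin_open_Int)
  ultimately show ?thesis unfolding openin_grass grass_def by auto
qed

lemma rowsp_in_pl_set:
  assumes "A \<in> frames d N" "rowsp d A \<in> rowsp d ` {A \<in> frames d N. P (pl d A)}" "scinv P"
  shows "P (pl d A)"
proof -
  obtain A' where "A' \<in> frames d N" "P (pl d A')" "rowsp d A = rowsp d A'" using assms(2) by auto
  then show ?thesis using sat_pl[of A' d N A P] assms(1,3) by auto
qed

lemma sum_id_left: "(\<Sum>m=1..N. id_mat N j m * X m) = (if 1\<le>j \<and> j\<le>N then X j else 0)"
proof -
  have "(\<Sum>m=1..N. id_mat N j m * X m) = (\<Sum>m=1..N. if j = m then (if 1\<le>j \<and> j\<le>N then X m else 0) else 0)"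
    unfolding id_mat_def by (rule sum.cong) auto
  also have "\<dots> = (if 1\<le>j \<and> j\<le>N then X j else 0)" by (simp only: sum.delta'[OF finite_atLeastAtMost]) auto
  finally show ?thesis .
qed

lemma sum_id_right: "(\<Sum>m=1..N. X m * id_mat N m k) = (if 1\<le>k \<and> k\<le>N then X k else 0)"
proof -
  have "(\<Sum>m=1..N. X m * id_mat N m k) = (\<Sum>m=1..N. if k = m then (if 1\<le>k \<and> k\<le>N then X m else 0) else 0)"
    unfolding id_mat_def by (rule sum.cong) auto
  also have "\<dots> = (if 1\<le>k \<and> k\<le>N then X k else 0)" by (simp only: sum.delta'[OF finite_atLeastAtMost]) auto
  finally show ?thesis .
qed

lemma act_lc: "(\<lambda>j. \<Sum>k=1..N. g j k * lc d c A k) = lc d c (\<lambda>i j. \<Sum>k=1..N. g j k * A i k)"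
  unfolding lc_def
  by (auto simp: sum_distrib_left sum_distrib_right mult.assoc mult.left_commute intro!: ext sum.swap)

lemma mat_act_rowsp: "mat_act N g (rowsp d A) = rowsp d (\<lambda>i j. \<Sum>k=1..N. g j k * A i k)"
proof -
  have "mat_act N g (rowsp d A) = (\<lambda>v j. \<Sum>k=1..N. g j k * v k) ` {lc d c A | c. True}"
    unfolding mat_act_def rowsp_lc ..
  also have "\<dots> = {(\<lambda>j. \<Sum>k=1..N. g j k * lc d c A k) | c. True}"
    by auto
  also have "\<dots> = {lc d c (\<lambda>i j. \<Sum>k=1..N. g j k * A i k) | c. True}"
    unfolding act_lc ..
  finally show ?thesis unfolding rowsp_lc .
qed

definition Ag :: "nat \<Rightarrow> (nat \<Rightarrow> nat \<Rightarrow> complex) \<Rightarrow> nat list \<Rightarrow> nat \<Rightarrow> nat \<Rightarrow> complex" where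
  "Ag d g w = (\<lambda>i j. if 1 \<le> i \<and> i \<le> d then g j (w!(i-1)) else 0)"

lemma Iseq_len: "w \<in> I_seq d N \<Longrightarrow> length w = d" unfolding I_seq_def by auto
lemma Iseq_range: "w \<in> I_seq d N \<Longrightarrow> i < d \<Longrightarrow> 1 \<le> w!i \<and> w!i \<le> N"
  unfolding I_seq_def by (auto simp: nth_mem)
lemma Iseq_mono: "w \<in> I_seq d N \<Longrightarrow> i < k \<Longrightarrow> k < d \<Longrightarrow> w!i < w!k"
  unfolding I_seq_def by (auto simp: sorted_wrt_iff_nth_less)
lemma Iseq_mono_iff: "w \<in> I_seq d N \<Longrightarrow> i < d \<Longrightarrow> k < d \<Longrightarrow> w!i < w!k \<longleftrightarrow> i < k"
  by (metis Iseq_mono less_asym' linorder_neqE_nat)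
lemma Iseq_inj: "w \<in> I_seq d N \<Longrightarrow> i < d \<Longrightarrow> k < d \<Longrightarrow> w!i = w!k \<longleftrightarrow> i = k"
  by (metis Iseq_mono less_irrefl linorder_neqE_nat)

lemma gew: assumes w: "w \<in> I_seq d N"
  shows "mat_act N g (e_pt w) = rowsp d (Ag d g w)"
proof -
  have len: "length w = d" using Iseq_len[OF w] .
  have "e_pt w = rowsp d (\<lambda>i j. if 1 \<le> i \<and> i \<le> d \<and> j = w ! (i - 1) then 1 else 0)"
    unfolding e_pt_def len ..
  then have "mat_act N g (e_pt w) = rowsp d (\<lambda>i j. \<Sum>k=1..N. g j k * (if 1 \<le> i \<and> i \<le> d \<and> k = w ! (i - 1) then 1 else 0))"
    by (simp add: mat_act_rowsp)
  also have "\<dots> = rowsp d (Ag d g w)"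
  proof (rule rowsp_cong)
    fix i assume i: "i \<in> {1..d}"
    then have r: "1 \<le> w!(i-1) \<and> w!(i-1) \<le> N" using Iseq_range[OF w, of "i-1"] by auto
    show "(\<lambda>j. \<Sum>k=1..N. g j k * (if 1 \<le> i \<and> i \<le> d \<and> k = w ! (i - 1) then 1 else 0)) = Ag d g w i"
    proof
      fix j
      have "(\<Sum>k=1..N. g j k * (if 1 \<le> i \<and> i \<le> d \<and> k = w ! (i - 1) then 1 else 0)) = (\<Sum>k=1..N. if k = w!(i-1) then g j k else 0)"
        using i by (intro sum.cong) auto
      also have "\<dots> = g j (w!(i-1))" using r by (simp only: sum.delta[OF finite_atLeastAtMost]) auto
      finally show "(\<Sum>k=1..N. g j k * (if 1 \<le> i \<and> i \<le> d \<and> k = w ! (i - 1) then 1 else 0)) = Ag d g w i j"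
        using i by (simp add: Ag_def)
    qed
  qed
  finally show ?thesis .
qed

lemma mat_mult_mm: "mat_mult N g h = mm N g h" unfolding mat_mult_def mm_def ..

lemma toM_id: "toM N (id_mat N) = 1\<^sub>m N"
  by (rule eq_matI) (auto simp: toM_def id_mat_def)

lemma borel_diag: assumes g: "g \<in> borel N" and k: "1 \<le> k" "k \<le> N"
  shows "g k k \<noteq> 0"
proof -
  obtain h where h: "mat_mult N g h = id_mat N" using g unfolding borel_def GL_def by auto
  have "toM N g * toM N h = 1\<^sub>m N" using h toM_mm[of N g h] toM_id unfolding mat_mult_mm by simp
  then have "det (toM N g) * det (toM N h) = 1" using det_mult[OF toM_carrier toM_carrier] det_one by metis
  then have dg: "det (toM N g) \<noteq> 0" by auto
  have ut: "upper_triangular (toM N g)" using g unfolding upper_triangular_def borel_def by (auto simp: toM_def)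
  have "det (toM N g) = (\<Prod>i=0..<N. g (Suc i) (Suc i))"
    using det_upper_triangular[OF ut toM_carrier] by (simp add: diag_mat_def prod_list_upt toM_def)
  then have "\<forall>i\<in>{0..<N}. g (Suc i) (Suc i) \<noteq> 0" using dg by auto
  moreover have "k - 1 \<in> {0..<N}" "Suc (k - 1) = k" using k by auto
  ultimately show ?thesis by metis
qed

lemma unip_borel:
  assumes nz: "\<And>j k. Nm j k \<noteq> 0 \<Longrightarrow> 1 \<le> j \<and> j < k \<and> k \<le> N"
    and sq: "\<And>j m k. Nm j m * Nm m k = 0"
  shows "(\<lambda>j k. id_mat N j k + Nm j k) \<in> borel N"
proof -
  let ?g = "\<lambda>j k. id_mat N j k + Nm j k"
  let ?h = "\<lambda>j k. id_mat N j k - Nm j k"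
  have Nb: "Nm j k = 0" if "\<not>(1 \<le> j \<and> j \<le> N \<and> 1 \<le> k \<and> k \<le> N)" for j k
    using nz[of j k] that by force
  have m1: "mat_mult N ?g ?h = id_mat N"
  proof (intro ext)
    fix j k
    have "(\<Sum>m=1..N. ?g j m * ?h m k) = (\<Sum>m=1..N. id_mat N j m * ?h m k) + (\<Sum>m=1..N. Nm j m * id_mat N m k) - (\<Sum>m=1..N. Nm j m * Nm m k)"
      by (simp add: algebra_simps sum.distrib sum_subtractf)
    also have "\<dots> = id_mat N j k" unfolding sum_id_left sum_id_right sq
      using Nb[of j k] by (auto simp: id_mat_def)
    finally show "mat_mult N ?g ?h j k = id_mat N j k" unfolding mat_mult_def .
  qed
  have m2: "mat_mult N ?h ?g = id_mat N"
  proof (intro ext)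
    fix j k
    have "(\<Sum>m=1..N. ?h j m * ?g m k) = (\<Sum>m=1..N. id_mat N j m * ?g m k) - (\<Sum>m=1..N. Nm j m * id_mat N m k) - (\<Sum>m=1..N. Nm j m * Nm m k)"
      by (simp add: algebra_simps sum.distrib sum_subtractf)
    also have "\<dots> = id_mat N j k" unfolding sum_id_left sum_id_right sq
      using Nb[of j k] by (auto simp: id_mat_def)
    finally show "mat_mult N ?h ?g j k = id_mat N j k" unfolding mat_mult_def .
  qed
  have sg: "?g \<in> sq_mat N" using Nb unfolding sq_mat_def id_mat_def by auto
  have sh: "?h \<in> sq_mat N" using Nb unfolding sq_mat_def id_mat_def by auto
  have ut: "\<forall>j k. k < j \<longrightarrow> ?g j k = 0" using nz unfolding id_mat_def by force
  show ?thesis unfolding borel_def GL_def using sg sh m1 m2 ut by blast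
qed

lemma scale_borel:
  assumes g: "g \<in> borel N" and t: "\<And>j. 1 \<le> j \<Longrightarrow> j \<le> N \<Longrightarrow> t j \<noteq> 0"
  shows "(\<lambda>j k. t j * g j k) \<in> borel N"
proof -
  obtain h where h: "h \<in> sq_mat N" "mat_mult N g h = id_mat N" "mat_mult N h g = id_mat N"
    using g unfolding borel_def GL_def by auto
  have gs: "g \<in> sq_mat N" and ut: "\<forall>j k. k < j \<longrightarrow> g j k = 0" using g unfolding borel_def GL_def by auto
  let ?g = "\<lambda>j k. t j * g j k"
  let ?h = "\<lambda>j k. h j k / t k"
  have m1: "mat_mult N ?g ?h = id_mat N"
  proof (intro ext)
    fix j k
    have "(\<Sum>m=1..N. ?g j m * ?h m k) = (\<Sum>m=1..N. t j / t k * (g j m * h m k))"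
      by (rule sum.cong) (simp_all add: divide_inverse mult_ac)
    also have "\<dots> = t j / t k * (\<Sum>m=1..N. g j m * h m k)"
      by (rule sum_distrib_left[symmetric])
    also have "\<dots> = t j / t k * id_mat N j k" using fun_cong[OF fun_cong[OF h(2)], of j k] unfolding mat_mult_def by simp
    also have "\<dots> = id_mat N j k" using t[of k] by (auto simp: id_mat_def)
    finally show "mat_mult N ?g ?h j k = id_mat N j k" unfolding mat_mult_def .
  qed
  have m2: "mat_mult N ?h ?g = id_mat N"
  proof (intro ext)
    fix j k
    have "(\<Sum>m=1..N. ?h j m * ?g m k) = (\<Sum>m=1..N. h j m * g m k)"
    proof (rule sum.cong[OF refl])
      fix m assume "m \<in> {1..N}"
      then have "t m \<noteq> 0" using t by auto
      then show "?h j m * ?g m k = h j m * g m k" by (simp add: field_simps)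
    qed
    also have "\<dots> = id_mat N j k" using fun_cong[OF fun_cong[OF h(3)], of j k] unfolding mat_mult_def by simp
    finally show "mat_mult N ?h ?g j k = id_mat N j k" unfolding mat_mult_def .
  qed
  have sg: "?g \<in> sq_mat N" using gs unfolding sq_mat_def by simp
  have sh: "?h \<in> sq_mat N" using h(1) unfolding sq_mat_def by simp
  have ut2: "\<forall>j k. k < j \<longrightarrow> ?g j k = 0" using ut by simp
  show ?thesis unfolding borel_def GL_def using sg sh m1 m2 ut2 by blast
qed

definition diagm :: "nat \<Rightarrow> (nat \<Rightarrow> complex) \<Rightarrow> nat \<Rightarrow> nat \<Rightarrow> complex" where
  "diagm N t = (\<lambda>j k. if j = k \<and> 1 \<le> j \<and> j \<le> N then t j else 0)"

lemma diagm_torus: assumes t: "\<And>j. 1 \<le> j \<Longrightarrow> j \<le> N \<Longrightarrow> t j \<noteq> 0"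
  shows "diagm N t \<in> torus N"
proof -
  let ?h = "diagm N (\<lambda>j. 1 / t j)"
  have m: "mat_mult N (diagm N s) (diagm N s') = diagm N (\<lambda>j. s j * s' j)" for s s'
  proof (intro ext)
    fix j k
    have "(\<Sum>m=1..N. diagm N s j m * diagm N s' m k) = (\<Sum>m=1..N. if j = m then (if j = k \<and> 1 \<le> j \<and> j \<le> N then s j * s' j else 0) else 0)"
      unfolding diagm_def by (rule sum.cong) auto
    also have "\<dots> = diagm N (\<lambda>j. s j * s' j) j k" by (simp only: sum.delta'[OF finite_atLeastAtMost]) (auto simp: diagm_def)
    finally show "mat_mult N (diagm N s) (diagm N s') j k = diagm N (\<lambda>j. s j * s' j) j k" unfolding mat_mult_def .
  qed
  have "diagm N (\<lambda>j. t j * (1 / t j)) = id_mat N" "diagm N (\<lambda>j. (1 / t j) * t j) = id_mat N"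
    using t by (auto simp: diagm_def id_mat_def intro!: ext)
  then have "mat_mult N (diagm N t) ?h = id_mat N" "mat_mult N ?h (diagm N t) = id_mat N" using m by auto
  moreover have "diagm N s \<in> sq_mat N" for s unfolding sq_mat_def diagm_def by auto
  ultimately show ?thesis unfolding torus_def GL_def by (auto simp: diagm_def)
qed

lemma torus_borel: "x \<in> torus N \<Longrightarrow> x \<in> borel N"
  unfolding torus_def borel_def by auto

lemma torus_act:
  assumes x: "x \<in> torus N" and box: "\<And>i j. \<not>(1\<le>j \<and> j\<le>N) \<Longrightarrow> A i j = 0"
  shows "mat_act N x (rowsp d A) = rowsp d (\<lambda>i j. A i j * x j j)"
proof -
  have xs: "x \<in> sq_mat N" and off: "\<And>j k. j \<noteq> k \<Longrightarrow> x j k = 0" using x unfolding torus_def GL_def by auto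
  have "(\<Sum>k=1..N. x j k * A i k) = A i j * x j j" for i j
  proof (cases "1 \<le> j \<and> j \<le> N")
    case True
    have "(\<Sum>k=1..N. x j k * A i k) = (\<Sum>k=1..N. if j = k then x j k * A i k else 0)"
      using off by (intro sum.cong) auto
    also have "\<dots> = A i j * x j j" using True by (simp only: sum.delta'[OF finite_atLeastAtMost]) auto
    finally show ?thesis .
  next
    case False
    then show ?thesis using xs box[of j i] unfolding sq_mat_def by auto
  qed
  then show ?thesis unfolding mat_act_rowsp by simp
qed

lemma Ag_pl_w: assumes g: "g \<in> borel N" and w: "w \<in> I_seq d N"
  shows "pl d (Ag d g w) w \<noteq> 0"
proof -
  have len: "length w = d" using Iseq_len[OF w] .
  have ut: "\<forall>j k. k < j \<longrightarrow> g j k = 0" using g unfolding borel_def by auto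
  have lt: "subm d (Ag d g w) w $$ (a,b) = 0" if "a < b" "b < d" for a b
  proof -
    have "w!a < w!b" using Iseq_mono[OF w that(1) that(2)] .
    then show ?thesis using that ut by (simp add: subm_def Ag_def)
  qed
  have "pl d (Ag d g w) w = prod_list (diag_mat (subm d (Ag d g w) w))"
    unfolding pl_def using det_lower_triangular[OF lt subm_carrier] by blast
  also have "\<dots> = (\<Prod>a=0..<d. g (w!a) (w!a))"
    by (simp add: diag_mat_def prod_list_upt subm_def Ag_def)
  also have "\<dots> \<noteq> 0"
  proof -
    have "\<forall>a\<in>{0..<d}. g (w!a) (w!a) \<noteq> 0" using borel_diag[OF g] Iseq_range[OF w] by auto
    then show ?thesis by simp
  qed
  finally show ?thesis .
qed

lemma Ag_frame: assumes g: "g \<in> borel N" and w: "w \<in> I_seq d N"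
  shows "Ag d g w \<in> frames d N"
proof (rule frame_of_pl[OF _ Ag_pl_w[OF g w]])
  fix i j assume h: "\<not> (1 \<le> i \<and> i \<le> d \<and> 1 \<le> j \<and> j \<le> N)"
  have gs: "g \<in> sq_mat N" using g unfolding borel_def GL_def by auto
  show "Ag d g w i j = 0"
  proof (cases "1 \<le> i \<and> i \<le> d")
    case True
    then have "\<not> (1 \<le> j \<and> j \<le> N)" using h by auto
    then show ?thesis using gs True unfolding sq_mat_def Ag_def by auto
  qed (auto simp add: Ag_def)
qed

lemma borel_orbit_grass: assumes w: "w \<in> I_seq d N"
  shows "(\<lambda>g. mat_act N g (e_pt w)) ` borel N \<subseteq> grass d N"
  using gew[OF w] Ag_frame[OF _ w] rowsp_grass by auto

lemma schubert_contains: assumes g: "g \<in> borel N" and w: "w \<in> I_seq d N"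
  shows "rowsp d (Ag d g w) \<in> schubert w d N"
proof -
  have sub: "(\<lambda>g. mat_act N g (e_pt w)) ` borel N \<subseteq> topspace (grass_top d N)"
    using borel_orbit_grass[OF w] topspace_grass by simp
  have "mat_act N g (e_pt w) \<in> (\<lambda>g. mat_act N g (e_pt w)) ` borel N" using g by auto
  then show ?thesis using closure_of_subset[OF sub] gew[OF w] unfolding schubert_def by auto
qed

lemma schubert_grass: "schubert w d N \<subseteq> grass d N"
  unfolding schubert_def using closure_of_subset_topspace topspace_grass by metis

lemma scale_frame: assumes A: "A \<in> frames d N" and s: "\<And>j. 1 \<le> j \<Longrightarrow> j \<le> N \<Longrightarrow> s j \<noteq> 0"
  shows "(\<lambda>i j. A i j * s j) \<in> frames d N"
proof -
  have box: "\<forall>i j. \<not>(1\<le>i \<and> i\<le>d \<and> 1\<le>j \<and> j\<le>N) \<longrightarrow> A i j = 0"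
    and ind: "\<forall>c. (\<forall>j. (\<Sum>i=1..d. c i * A i j) = 0) \<longrightarrow> (\<forall>i\<in>{1..d}. c i = 0)"
    using A unfolding frames_def by auto
  have "\<forall>i\<in>{1..d}. c i = 0" if h: "\<forall>j. (\<Sum>i=1..d. c i * (A i j * s j)) = 0" for c
  proof -
    have "(\<Sum>i=1..d. c i * A i j) = 0" for j
    proof (cases "1 \<le> j \<and> j \<le> N")
      case True
      have "(\<Sum>i=1..d. c i * A i j) * s j = (\<Sum>i=1..d. c i * (A i j * s j))"
        by (simp add: sum_distrib_right mult.assoc)
      also have "\<dots> = 0" using h by simp
      finally show ?thesis using s True by simp
    next
      case False
      then show ?thesis using box by simp
    qed
    then show ?thesis using ind by blast
  qed
  then show ?thesis using box unfolding frames_def by simp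
qed

definition wt :: "nat \<Rightarrow> (nat \<Rightarrow> complex) \<Rightarrow> nat list \<Rightarrow> complex" where
  "wt d t I = (\<Prod>b=0..<d. t (I!b))"

lemma wt_upd: assumes i: "i < d" and len: "length w = d"
  shows "wt d t (w[i:=j]) * t (w!i) = wt d t w * t j"
proof -
  have fin: "finite {0..<d}" and iin: "i \<in> {0..<d}" using i by auto
  have "wt d t (w[i:=j]) = t (w[i:=j]!i) * (\<Prod>b\<in>{0..<d}-{i}. t (w[i:=j]!b))"
    unfolding wt_def by (rule prod.remove[OF fin iin])
  also have "w[i:=j]!i = j" using i len by simp
  finally have "wt d t (w[i:=j]) = t j * (\<Prod>b\<in>{0..<d}-{i}. t (w[i:=j]!b))" .
  also have "(\<Prod>b\<in>{0..<d}-{i}. t (w[i:=j]!b)) = (\<Prod>b\<in>{0..<d}-{i}. t (w!b))"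
    by (rule prod.cong) auto
  finally have 1: "wt d t (w[i:=j]) = t j * (\<Prod>b\<in>{0..<d}-{i}. t (w!b))" .
  have 2: "wt d t w = t (w!i) * (\<Prod>b\<in>{0..<d}-{i}. t (w!b))"
    unfolding wt_def by (rule prod.remove[OF fin iin])
  show ?thesis unfolding 1 2 by (simp add: mult_ac)
qed

lemma pl_scale_wt: "pl d (\<lambda>i j. A i j * t j) I = pl d A I * wt d t I"
  unfolding wt_def by (rule pl_scale)

lemma not_spherical:
  assumes w: "w \<in> I_seq d N" and i12: "i1 < i2" "i2 < d" and di1: "d < w!i1"
    and q: "1 \<le> q" "q \<le> d" "q \<notin> set w" and q': "1 \<le> q'" "q' \<le> d" "q' \<notin> set w" and qq: "q \<noteq> q'"
  shows "\<not> T_spherical w d N"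
proof
  assume "T_spherical w d N"
  then obtain V where V: "V \<in> schubert w d N"
    and dense: "schubert w d N \<subseteq> (grass_top d N) closure_of ((\<lambda>t. mat_act N t V) ` torus N)"
    unfolding T_spherical_def Let_def by blast
  let ?Orb = "(\<lambda>t. mat_act N t V) ` torus N"
  have len: "length w = d" using Iseq_len[OF w] .
  have i1d: "i1 < d" using i12 by simp
  have di2: "d < w!i2" using di1 Iseq_mono[OF w i12] by simp
  have wr1: "1 \<le> w!i1 \<and> w!i1 \<le> N" and wr2: "1 \<le> w!i2 \<and> w!i2 \<le> N" using Iseq_range[OF w] i12 by auto
  have qw: "w!k \<noteq> q" "w!k \<noteq> q'" if "k < d" for k using q(3) q'(3) that len nth_mem by force+
  define I1 where "I1 = w[i1:=q]"
  define I2 where "I2 = w[i2:=q']"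
  define I3 where "I3 = w[i1:=q']"
  define I4 where "I4 = w[i2:=q]"
  define Nm where "Nm = (\<lambda>(a::complex) (b::complex) (c::complex) (e::complex) (j::nat) (k::nat).
     if j = q \<and> k = w!i1 then a else if j = q' \<and> k = w!i1 then b
     else if j = q \<and> k = w!i2 then c else if j = q' \<and> k = w!i2 then e else 0)"
  define G where "G = (\<lambda>a b c e. (\<lambda>j k. id_mat N j k + Nm a b c e j k))"
  have Gb: "G a b c e \<in> borel N" for a b c e
    unfolding G_def
  proof (rule unip_borel)
    fix j k assume "Nm a b c e j k \<noteq> 0"
    then have "(j = q \<or> j = q') \<and> (k = w!i1 \<or> k = w!i2)" unfolding Nm_def by (auto split: if_splits)
    then show "1 \<le> j \<and> j < k \<and> k \<le> N" using q q' di1 di2 wr1 wr2 by auto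
  next
    fix j m k
    show "Nm a b c e j m * Nm a b c e m k = 0"
      unfolding Nm_def using q q' di1 di2 by auto
  qed
  define R where "R = (\<lambda>a b c e. Ag d (G a b c e) w)"
  have Rred: "\<forall>i k. i<d \<longrightarrow> k<d \<longrightarrow> R a b c e (Suc i) (w!k) = (if i = k then 1 else 0)" for a b c e
  proof (intro allI impI)
    fix i k assume ik: "i < d" "k < d"
    have "Nm a b c e (w!k) (w!i) = 0" using qw[OF ik(2)] unfolding Nm_def by auto
    moreover have "id_mat N (w!k) (w!i) = (if i = k then 1 else 0)"
      using Iseq_inj[OF w ik(2) ik(1)] Iseq_range[OF w ik(1)] unfolding id_mat_def by auto
    ultimately show "R a b c e (Suc i) (w!k) = (if i = k then 1 else 0)"
      using ik unfolding R_def G_def Ag_def by simp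
  qed
  have idq: "id_mat N q (w!i) = 0" "id_mat N q' (w!i) = 0" if "i < d" for i
    using qw[OF that] unfolding id_mat_def by auto
  have vals: "pl d (R a b c e) I1 = a" "pl d (R a b c e) I2 = e" "pl d (R a b c e) I3 = b" "pl d (R a b c e) I4 = c" for a b c e
    unfolding I1_def I2_def I3_def I4_def
    using pl_reduced[OF Rred i1d len] pl_reduced[OF Rred i12(2) len] idq[OF i1d] idq[OF i12(2)]
      qq i12 Iseq_inj[OF w i1d i12(2)]
    by (auto simp: R_def G_def Ag_def Nm_def)
  have Rfr: "R a b c e \<in> frames d N" for a b c e unfolding R_def using Ag_frame[OF Gb w] .
  have RX: "rowsp d (R a b c e) \<in> schubert w d N" for a b c e unfolding R_def using schubert_contains[OF Gb w] .
  have "V \<in> rowsp d ` frames d N" using subsetD[OF schubert_grass V] unfolding grass_def .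
  then obtain A0 where A0: "A0 \<in> frames d N" "V = rowsp d A0" by (rule imageE) simp
  have A0box: "\<And>i j. \<not>(1\<le>j \<and> j\<le>N) \<Longrightarrow> A0 i j = 0" using A0(1) unfolding frames_def by auto
  have orb: "mat_act N x V = rowsp d (\<lambda>i j. A0 i j * x j j)" if "x \<in> torus N" for x
    unfolding A0(2) using torus_act[OF that A0box] .
  have xnz: "x j j \<noteq> 0" if "x \<in> torus N" "1 \<le> j" "j \<le> N" for x j
    using borel_diag[OF torus_borel[OF that(1)] that(2,3)] .
  have A0t: "(\<lambda>i j. A0 i j * x j j) \<in> frames d N" if "x \<in> torus N" for x
    by (rule scale_frame[OF A0(1)]) (rule xnz[OF that])
  define P0 where "P0 = (\<lambda>f::nat list \<Rightarrow> complex. f I3 \<noteq> 0 \<and> f I4 \<noteq> 0)"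
  have P0s: "scinv P0" unfolding scinv_def P0_def by auto
  have P0o: "open {A. P0 (pl d A)}"
  proof -
    have "{A. P0 (pl d A)} = {A. pl d A I3 \<noteq> 0} \<inter> {A. pl d A I4 \<noteq> 0}" unfolding P0_def by auto
    then show ?thesis using open_Int[OF open_Collect_neq[OF cont_pl continuous_on_const] open_Collect_neq[OF cont_pl continuous_on_const]]
      by metis
  qed
  have mem: "rowsp d (R 1 1 1 1) \<in> rowsp d ` {A \<in> frames d N. P0 (pl d A)}"
    using Rfr[of 1 1 1 1] vals[of 1 1 1 1] unfolding P0_def by (intro imageI) simp
  have "rowsp d (R 1 1 1 1) \<in> (grass_top d N) closure_of ?Orb" using subsetD[OF dense RX] .
  then have "\<forall>T. rowsp d (R 1 1 1 1) \<in> T \<and> openin (grass_top d N) T \<longrightarrow> (\<exists>yy. yy \<in> ?Orb \<and> yy \<in> T)"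
    unfolding in_closure_of by blast
  then have "\<exists>yy. yy \<in> ?Orb \<and> yy \<in> rowsp d ` {A \<in> frames d N. P0 (pl d A)}"
    using conjI[OF mem open_pl_set[OF P0o P0s]] by blast
  then obtain x where x: "x \<in> torus N" "mat_act N x V \<in> rowsp d ` {A \<in> frames d N. P0 (pl d A)}"
    by blast
  have "P0 (pl d (\<lambda>i j. A0 i j * x j j))"
    using rowsp_in_pl_set[OF A0t[OF x(1)] _ P0s] x(2) orb[OF x(1)] by simp
  then have nz3: "pl d A0 I3 \<noteq> 0" and nz4: "pl d A0 I4 \<noteq> 0"
    unfolding P0_def pl_scale_wt[of d A0 "\<lambda>j. x j j"] by auto
  define c where "c = pl d A0 I1 * pl d A0 I2 / (pl d A0 I3 * pl d A0 I4)"
  \<comment> \<open>step 2: invariance along the orbit\<close>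
  have inv: "pl d (\<lambda>i j. A0 i j * y j j) I1 * pl d (\<lambda>i j. A0 i j * y j j) I2
      = c * (pl d (\<lambda>i j. A0 i j * y j j) I3 * pl d (\<lambda>i j. A0 i j * y j j) I4)" if y: "y \<in> torus N" for y
  proof -
    let ?t = "\<lambda>j. y j j"
    have t1: "?t (w!i1) \<noteq> 0" and t2: "?t (w!i2) \<noteq> 0" using xnz[OF y] wr1 wr2 by auto
    have "wt d ?t I1 * wt d ?t I2 * (?t (w!i1) * ?t (w!i2)) = wt d ?t I3 * wt d ?t I4 * (?t (w!i1) * ?t (w!i2))"
    proof -
      have "wt d ?t I1 * wt d ?t I2 * (?t (w!i1) * ?t (w!i2)) = (wt d ?t I1 * ?t (w!i1)) * (wt d ?t I2 * ?t (w!i2))"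
        by (simp add: mult_ac)
      also have "\<dots> = (wt d ?t w * ?t q) * (wt d ?t w * ?t q')"
        unfolding I1_def I2_def using wt_upd[OF i1d len, of ?t q] wt_upd[OF i12(2) len, of ?t q'] by simp
      also have "\<dots> = (wt d ?t w * ?t q') * (wt d ?t w * ?t q)" by (simp add: mult_ac)
      also have "\<dots> = (wt d ?t I3 * ?t (w!i1)) * (wt d ?t I4 * ?t (w!i2))"
        unfolding I3_def I4_def using wt_upd[OF i1d len, of ?t q'] wt_upd[OF i12(2) len, of ?t q] by simp
      also have "\<dots> = wt d ?t I3 * wt d ?t I4 * (?t (w!i1) * ?t (w!i2))" by (simp add: mult_ac)
      finally show ?thesis .
    qed
    then have ww: "wt d ?t I1 * wt d ?t I2 = wt d ?t I3 * wt d ?t I4" using t1 t2 by simp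
    show ?thesis unfolding pl_scale_wt c_def using nz3 nz4 ww
      by (simp add: field_simps)
  qed
  define Pc where "Pc = (\<lambda>f::nat list \<Rightarrow> complex. f I3 \<noteq> 0 \<and> f I4 \<noteq> 0 \<and> f I1 * f I2 \<noteq> c * (f I3 * f I4))"
  have Pcs: "scinv Pc" unfolding scinv_def Pc_def
  proof (intro allI impI)
    fix f :: "nat list \<Rightarrow> complex" and c' :: complex
    assume h: "f I3 \<noteq> 0 \<and> f I4 \<noteq> 0 \<and> f I1 * f I2 \<noteq> c * (f I3 * f I4)" and c': "c' \<noteq> 0"
    have "c' * f I1 * (c' * f I2) = (c' * c') * (f I1 * f I2)" "c * (c' * f I3 * (c' * f I4)) = (c' * c') * (c * (f I3 * f I4))"
      by (simp_all add: mult_ac)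
    then show "c' * f I3 \<noteq> 0 \<and> c' * f I4 \<noteq> 0 \<and> c' * f I1 * (c' * f I2) \<noteq> c * (c' * f I3 * (c' * f I4))"
      using h c' by auto
  qed
  have Pco: "open {A. Pc (pl d A)}"
  proof -
    have "continuous_on UNIV (\<lambda>A. pl d A I1 * pl d A I2)" "continuous_on UNIV (\<lambda>A. c * (pl d A I3 * pl d A I4))"
      by (intro continuous_on_mult continuous_on_const cont_pl)+
    then have o1: "open {A. pl d A I1 * pl d A I2 \<noteq> c * (pl d A I3 * pl d A I4)}"
      by (rule open_Collect_neq)
    have o2: "open {A. pl d A I3 \<noteq> 0}" and o3: "open {A. pl d A I4 \<noteq> 0}"
      by (rule open_Collect_neq[OF cont_pl continuous_on_const])+
    have eq: "{A. Pc (pl d A)} = ({A. pl d A I3 \<noteq> 0} \<inter> {A. pl d A I4 \<noteq> 0}) \<inter> {A. pl d A I1 * pl d A I2 \<noteq> c * (pl d A I3 * pl d A I4)}"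
      unfolding Pc_def by auto
    show ?thesis unfolding eq by (intro open_Int o1 o2 o3)
  qed
  have "\<exists>a b cc e. Pc (pl d (R a b cc e))"
  proof (cases "c = 1")
    case True
    then show ?thesis unfolding Pc_def vals by (intro exI[of _ 1] exI[of _ 1] exI[of _ 1] exI[of _ 2]) simp
  next
    case False
    then show ?thesis unfolding Pc_def vals by (intro exI[of _ 1] exI[of _ 1] exI[of _ 1] exI[of _ 1]) simp
  qed
  then obtain a b cc e where Pca: "Pc (pl d (R a b cc e))" by blast
  have mem2: "rowsp d (R a b cc e) \<in> rowsp d ` {A \<in> frames d N. Pc (pl d A)}"
    using Rfr[of a b cc e] Pca by (intro imageI) simp
  have "rowsp d (R a b cc e) \<in> (grass_top d N) closure_of ?Orb" using subsetD[OF dense RX] .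
  then have "\<forall>T. rowsp d (R a b cc e) \<in> T \<and> openin (grass_top d N) T \<longrightarrow> (\<exists>yy. yy \<in> ?Orb \<and> yy \<in> T)"
    unfolding in_closure_of by blast
  then have "\<exists>yy. yy \<in> ?Orb \<and> yy \<in> rowsp d ` {A \<in> frames d N. Pc (pl d A)}"
    using conjI[OF mem2 open_pl_set[OF Pco Pcs]] by blast
  then obtain y where y: "y \<in> torus N" "mat_act N y V \<in> rowsp d ` {A \<in> frames d N. Pc (pl d A)}"
    by blast
  have "Pc (pl d (\<lambda>i j. A0 i j * y j j))"
    using rowsp_in_pl_set[OF A0t[OF y(1)] _ Pcs] y(2) orb[OF y(1)] by simp
  then show False using inv[OF y(1)] unfolding Pc_def by simp
qed

definition allowed :: "nat list \<Rightarrow> nat \<Rightarrow> nat \<Rightarrow> bool" where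
  "allowed w i j = (1 \<le> j \<and> j \<notin> set w \<and> j < w!i)"

definition Nm0 :: "nat list \<Rightarrow> nat \<Rightarrow> nat \<Rightarrow> complex" where
  "Nm0 w = (\<lambda>j k. if 1 \<le> j \<and> j \<notin> set w \<and> k \<in> set w \<and> j < k then 1 else 0)"

definition g0 :: "nat \<Rightarrow> nat list \<Rightarrow> nat \<Rightarrow> nat \<Rightarrow> complex" where
  "g0 N w = (\<lambda>j k. id_mat N j k + Nm0 w j k)"

definition R0 :: "nat \<Rightarrow> nat \<Rightarrow> nat list \<Rightarrow> nat \<Rightarrow> nat \<Rightarrow> complex" where
  "R0 d N w = Ag d (g0 N w) w"

definition Pcf :: "nat \<Rightarrow> nat \<Rightarrow> nat list \<Rightarrow> (nat list \<Rightarrow> complex) \<Rightarrow> bool" where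
  "Pcf d N w f = (\<forall>i<d. \<forall>j. 1 \<le> j \<and> j \<le> N \<and> w!i < j \<longrightarrow> f (w[i:=j]) = 0)"

definition Pof :: "nat \<Rightarrow> nat \<Rightarrow> nat list \<Rightarrow> (nat list \<Rightarrow> complex) \<Rightarrow> bool" where
  "Pof d N w f = (f w \<noteq> 0 \<and> (\<forall>i<d. \<forall>j. j \<le> N \<and> allowed w i j \<longrightarrow> f (w[i:=j]) \<noteq> 0))"

lemma Pcf_scinv: "scinv (Pcf d N w)" unfolding scinv_def Pcf_def by auto
lemma nPcf_scinv: "scinv (\<lambda>f. \<not> Pcf d N w f)" unfolding scinv_def Pcf_def by auto
lemma Pof_scinv: "scinv (Pof d N w)" unfolding scinv_def Pof_def by auto

lemma nPcf_open: "open {A. \<not> Pcf d N w (pl d A)}"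
proof -
  define E where "E = {ij. fst ij < d \<and> 1 \<le> snd ij \<and> snd ij \<le> N \<and> w!(fst ij) < snd ij}"
  have fin: "finite E" by (rule finite_subset[of _ "{0..<d} \<times> {0..N}"]) (auto simp: E_def)
  have eq: "{A. \<not> Pcf d N w (pl d A)} = (\<Union>ij\<in>E. {A. pl d A (w[fst ij := snd ij]) \<noteq> 0})"
  proof (intro equalityI subsetI)
    fix A assume "A \<in> {A. \<not> Pcf d N w (pl d A)}"
    then obtain i j where ij: "i < d" "1 \<le> j" "j \<le> N" "w!i < j" "pl d A (w[i:=j]) \<noteq> 0"
      unfolding Pcf_def by auto
    then show "A \<in> (\<Union>ij\<in>E. {A. pl d A (w[fst ij := snd ij]) \<noteq> 0})"
      by (intro UN_I[of "(i,j)"]) (auto simp: E_def)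
  next
    fix A assume "A \<in> (\<Union>ij\<in>E. {A. pl d A (w[fst ij := snd ij]) \<noteq> 0})"
    then obtain ij where "ij \<in> E" "pl d A (w[fst ij := snd ij]) \<noteq> 0" by blast
    then show "A \<in> {A. \<not> Pcf d N w (pl d A)}" unfolding Pcf_def E_def by auto
  qed
  show ?thesis unfolding eq
    by (intro open_UN ballI open_Collect_neq[OF cont_pl continuous_on_const])
qed

lemma Pof_open: "open {A. Pof d N w (pl d A)}"
proof -
  define E where "E = {ij. fst ij < d \<and> snd ij \<le> N \<and> allowed w (fst ij) (snd ij)}"
  have fin: "finite E" by (rule finite_subset[of _ "{0..<d} \<times> {0..N}"]) (auto simp: E_def)
  have eq: "{A. Pof d N w (pl d A)} = {A. pl d A w \<noteq> 0} \<inter> (\<Inter>ij\<in>E. {A. pl d A (w[fst ij := snd ij]) \<noteq> 0})"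
  proof (intro equalityI subsetI)
    fix A assume "A \<in> {A. Pof d N w (pl d A)}"
    then show "A \<in> {A. pl d A w \<noteq> 0} \<inter> (\<Inter>ij\<in>E. {A. pl d A (w[fst ij := snd ij]) \<noteq> 0})"
      unfolding Pof_def E_def by auto
  next
    fix A assume h: "A \<in> {A. pl d A w \<noteq> 0} \<inter> (\<Inter>ij\<in>E. {A. pl d A (w[fst ij := snd ij]) \<noteq> 0})"
    have "pl d A (w[i:=j]) \<noteq> 0" if "i < d" "j \<le> N" "allowed w i j" for i j
    proof -
      have "(i,j) \<in> E" using that by (simp add: E_def)
      then show ?thesis using h by auto
    qed
    then show "A \<in> {A. Pof d N w (pl d A)}" using h unfolding Pof_def by auto
  qed
  show ?thesis unfolding eq
    by (intro open_Int open_INT fin ballI open_Collect_neq[OF cont_pl continuous_on_const])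
qed

lemma g0_borel: assumes w: "w \<in> I_seq d N" shows "g0 N w \<in> borel N"
  unfolding g0_def
proof (rule unip_borel)
  fix j k assume "Nm0 w j k \<noteq> 0"
  then have "1 \<le> j \<and> j \<notin> set w \<and> k \<in> set w \<and> j < k" unfolding Nm0_def by (auto split: if_splits)
  moreover have "k \<in> set w \<Longrightarrow> k \<le> N" using w unfolding I_seq_def by auto
  ultimately show "1 \<le> j \<and> j < k \<and> k \<le> N" by auto
next
  fix j m k show "Nm0 w j m * Nm0 w m k = 0" unfolding Nm0_def by auto
qed

lemma R0_entry: assumes w: "w \<in> I_seq d N" and i: "i < d"
  shows "R0 d N w (Suc i) j = (if j = w!i then 1 else 0) + (if allowed w i j then 1 else 0)"
proof -
  have wi: "w!i \<in> set w" "1 \<le> w!i" "w!i \<le> N" using Iseq_range[OF w i] Iseq_len[OF w] i by auto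
  have "id_mat N j (w!i) = (if j = w!i then 1 else 0)" using wi unfolding id_mat_def by auto
  moreover have "Nm0 w j (w!i) = (if allowed w i j then 1 else 0)" using wi unfolding Nm0_def allowed_def by auto
  ultimately show ?thesis using i unfolding R0_def Ag_def g0_def by simp
qed

lemma R0_red: assumes w: "w \<in> I_seq d N"
  shows "\<forall>i k. i<d \<longrightarrow> k<d \<longrightarrow> R0 d N w (Suc i) (w!k) = (if i = k then 1 else 0)"
proof (intro allI impI)
  fix i k assume ik: "i < d" "k < d"
  have "w!k \<in> set w" using Iseq_len[OF w] ik by auto
  then have "\<not> allowed w i (w!k)" unfolding allowed_def by auto
  then show "R0 d N w (Suc i) (w!k) = (if i = k then 1 else 0)"
    unfolding R0_entry[OF w ik(1)] using Iseq_inj[OF w ik(2) ik(1)] by auto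
qed

lemma R0_frame: "w \<in> I_seq d N \<Longrightarrow> R0 d N w \<in> frames d N"
  unfolding R0_def by (rule Ag_frame[OF g0_borel])

lemma R0_box: "w \<in> I_seq d N \<Longrightarrow> \<not>(1\<le>j \<and> j\<le>N) \<Longrightarrow> R0 d N w i j = 0"
  using R0_frame unfolding frames_def by blast

lemma Ag_Pcf: assumes g: "g \<in> borel N" and w: "w \<in> I_seq d N" and i: "i < d" and j: "w!i < j"
  shows "pl d (Ag d g w) (w[i:=j]) = 0"
proof -
  have len: "length w = d" using Iseq_len[OF w] .
  have ut: "\<And>a b. b < a \<Longrightarrow> g a b = 0" using g unfolding borel_def by auto
  have pz: "(\<Prod>a=0..<d. Ag d g w (Suc a) (w[i:=j] ! p a)) = 0" if p: "p permutes {0..<d}" for p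
  proof -
    have "\<exists>a\<in>{0..i}. \<not> p a < i"
    proof (rule ccontr)
      assume "\<not> ?thesis"
      then have "p ` {0..i} \<subseteq> {0..<i}" by auto
      moreover have "inj_on p {0..i}" using permutes_inj[OF p] by (auto intro: inj_on_subset)
      ultimately have "card {0..i} \<le> card {0..<i}" using card_inj_on_le by blast
      then show False by simp
    qed
    then obtain a where a: "a \<le> i" "i \<le> p a" by auto
    have pad: "p a < d" using permutes_in_image[OF p, of a] a i by auto
    have "Ag d g w (Suc a) (w[i:=j] ! p a) = 0"
    proof (cases "p a = i")
      case True
      have "w!a \<le> w!i" using a(1) Iseq_mono[OF w, of a i] i by (cases "a = i") auto
      then show ?thesis using True ut[of "w!a" j] j i len by (simp add: Ag_def)
    next
      case False
      then have "i < p a" using a by auto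
      then have "w!a < w!(p a)" using Iseq_mono[OF w, of a "p a"] a pad by auto
      then show ?thesis using False ut pad len a i by (simp add: Ag_def)
    qed
    moreover have "a \<in> {0..<d}" using a i by auto
    ultimately show ?thesis by (meson finite_atLeastLessThan prod_zero_iff)
  qed
  show ?thesis unfolding pl_leibniz
  proof (rule sum.neutral, intro ballI)
    fix p assume "p \<in> {p. p permutes {0..<d}}"
    then have "p permutes {0..<d}" by simp
    then show "signof p * (\<Prod>a=0..<d. Ag d g w (Suc a) (w[i:=j] ! p a)) = 0"
      by (simp only: pz mult_zero_right)
  qed
qed

lemma rowsp_rowscale: assumes s: "\<And>i. i \<in> {1..d} \<Longrightarrow> s i \<noteq> 0"
  shows "rowsp d (\<lambda>i j. s i * B i j) = rowsp d B"
proof -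
  have 1: "lc d c (\<lambda>i j. s i * B i j) = lc d (\<lambda>i. c i * s i) B" for c
    unfolding lc_def by (simp add: mult.assoc)
  have 2: "lc d c B = lc d (\<lambda>i. c i / s i) (\<lambda>i j. s i * B i j)" for c
    unfolding lc_def
  proof (intro ext sum.cong[OF refl])
    fix j i assume "i \<in> {1..d}"
    then show "c i * B i j = c i / s i * (s i * B i j)" using s by (simp add: field_simps)
  qed
  show ?thesis unfolding rowsp_lc
  proof (intro equalityI subsetI)
    fix x assume "x \<in> {lc d c (\<lambda>i j. s i * B i j) |c. True}"
    then show "x \<in> {lc d c B |c. True}" using 1 by auto
  next
    fix x assume "x \<in> {lc d c B |c. True}"
    then show "x \<in> {lc d c (\<lambda>i j. s i * B i j) |c. True}" using 2 by auto
  qed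
qed

lemma chart_entries:
  assumes w: "w \<in> I_seq d N" and A: "A \<in> frames d N" and Pc: "Pcf d N w (pl d A)" and nz: "pl d A w \<noteq> 0"
  obtains R where "rowsp d R = rowsp d A" "R \<in> frames d N"
    "\<forall>i k. i<d \<longrightarrow> k<d \<longrightarrow> R (Suc i) (w!k) = (if i = k then 1 else 0)"
    "\<And>i j. \<not>(1\<le>i \<and> i\<le>d \<and> 1\<le>j \<and> j\<le>N) \<Longrightarrow> R i j = 0"
    "\<And>i j. i < d \<Longrightarrow> 1 \<le> j \<Longrightarrow> j \<le> N \<Longrightarrow> w!i < j \<Longrightarrow> R (Suc i) j = 0"
    "\<And>i j. i < d \<Longrightarrow> pl d A (w[i:=j]) \<noteq> 0 \<Longrightarrow> R (Suc i) j \<noteq> 0"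
proof -
  have len: "length w = d" using Iseq_len[OF w] .
  obtain R where R: "rowsp d R = rowsp d A" "\<forall>i k. i<d \<longrightarrow> k<d \<longrightarrow> R (Suc i) (w!k) = (if i = k then 1 else 0)"
    "\<forall>I. pl d R I = pl d A I / pl d A w" "\<forall>i j. \<not>(1\<le>i \<and> i\<le>d \<and> 1\<le>j \<and> j\<le>N) \<longrightarrow> R i j = 0"
    using chart[OF A nz] by blast
  have ent: "R (Suc i) j = pl d A (w[i:=j]) / pl d A w" if "i < d" for i j
    using pl_reduced[OF R(2) that len, of j] R(3) by simp
  have fr: "R \<in> frames d N"
    using frame_of_pl[of d N R w] R(4) pl_reduced_w[OF R(2)] by auto
  show ?thesis
  proof (rule that[OF R(1) fr R(2)])
    fix i j assume "\<not>(1\<le>i \<and> i\<le>d \<and> 1\<le>j \<and> j\<le>N)" then show "R i j = 0" using R(4) by blast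
  next
    fix i j assume "i < d" "1 \<le> j" "j \<le> N" "w!i < j"
    then show "R (Suc i) j = 0" using ent Pc unfolding Pcf_def by simp
  next
    fix i j assume "i < d" "pl d A (w[i:=j]) \<noteq> 0"
    then show "R (Suc i) j \<noteq> 0" using ent nz by simp
  qed
qed

lemma toric_orbit:
  assumes w: "w \<in> I_seq d N" and tor: "\<forall>i. Suc i < d \<longrightarrow> w!i \<le> d"
    and q: "1 \<le> q" "q \<le> d" "q \<notin> set w" and quni: "\<forall>j. 1 \<le> j \<longrightarrow> j \<le> d \<longrightarrow> j \<notin> set w \<longrightarrow> j = q"
    and A: "A \<in> frames d N" and Pc: "Pcf d N w (pl d A)" and Po: "Pof d N w (pl d A)"
  shows "\<exists>x \<in> torus N. rowsp d A = rowsp d (\<lambda>i j. R0 d N w i j * x j j)"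
proof -
  have len: "length w = d" using Iseq_len[OF w] .
  have nz: "pl d A w \<noteq> 0" using Po unfolding Pof_def by simp
  obtain R where R: "rowsp d R = rowsp d A" "R \<in> frames d N"
    "\<forall>i k. i<d \<longrightarrow> k<d \<longrightarrow> R (Suc i) (w!k) = (if i = k then 1 else 0)"
    "\<And>i j. \<not>(1\<le>i \<and> i\<le>d \<and> 1\<le>j \<and> j\<le>N) \<Longrightarrow> R i j = 0"
    "\<And>i j. i < d \<Longrightarrow> 1 \<le> j \<Longrightarrow> j \<le> N \<Longrightarrow> w!i < j \<Longrightarrow> R (Suc i) j = 0"
    "\<And>i j. i < d \<Longrightarrow> pl d A (w[i:=j]) \<noteq> 0 \<Longrightarrow> R (Suc i) j \<noteq> 0"
    by (rule chart_entries[OF w A Pc nz]) blast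
  have Rnz: "R (Suc i) j \<noteq> 0" if "i < d" "j \<le> N" "allowed w i j" for i j
    using R(6)[OF that(1)] Po that unfolding Pof_def by blast
  define s where "s i = (if q < w!i then R (Suc i) q else 1)" for i
  have snz: "s i \<noteq> 0" if "i < d" for i
  proof (cases "q < w!i")
    case True
    have "w!i \<le> N" using Iseq_range[OF w that] by simp
    then have "allowed w i q" "q \<le> N" using True q unfolding allowed_def by auto
    then show ?thesis using Rnz[OF that] True unfolding s_def by simp
  qed (simp add: s_def)
  define ell where "ell = w!(d-1)"
  define tc where "tc j = (if j \<in> set w then 1 / s (THE i. i<d \<and> w!i = j) else if j = q then 1
      else if d < j \<and> j < ell then R d j / s (d-1) else 1)" for j
  have d1: "1 \<le> d" using q by simp
  have tcw: "tc (w!k) = 1 / s k" if "k < d" for k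
  proof -
    have "(THE i. i<d \<and> w!i = w!k) = k"
      by (rule the_equality) (use that Iseq_inj[OF w] in auto)
    then show ?thesis using that len unfolding tc_def by simp
  qed
  have tcnz: "tc j \<noteq> 0" if "1 \<le> j" "j \<le> N" for j
  proof (cases "j \<in> set w")
    case True
    then obtain k where k: "k < d" "j = w!k" using len by (auto simp: in_set_conv_nth)
    then show ?thesis using tcw snz by simp
  next
    case False
    show ?thesis
    proof (cases "j \<noteq> q \<and> d < j \<and> j < ell")
      case True
      have "allowed w (d-1) j" using True False that unfolding allowed_def ell_def by auto
      then have "R (Suc (d-1)) j \<noteq> 0" using Rnz[of "d-1" j] d1 that by auto
      then have "R d j \<noteq> 0" using d1 by simp
      then show ?thesis using True False snz[of "d-1"] d1 unfolding tc_def by auto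
    next
      case False
      then show ?thesis using \<open>j \<notin> set w\<close> unfolding tc_def by auto
    qed
  qed
  define x where "x = diagm N tc"
  have xt: "x \<in> torus N" unfolding x_def by (rule diagm_torus) (use tcnz in auto)
  have key: "R (Suc i) j = s i * (R0 d N w (Suc i) j * x j j)" if i: "i < d" for i j
  proof -
    consider (out) "\<not>(1 \<le> j \<and> j \<le> N)" | (inw) "1 \<le> j \<and> j \<le> N" "j \<in> set w"
      | (big) "1 \<le> j \<and> j \<le> N" "j \<notin> set w" "w!i < j" | (small) "1 \<le> j \<and> j \<le> N" "j \<notin> set w" "j < w!i"
      using nth_mem[of i w] i len by (metis linorder_neqE_nat)
    then show ?thesis
    proof cases
      case out
      then show ?thesis using R(4)[of "Suc i" j] by (auto simp: x_def diagm_def)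
    next
      case inw
      then obtain k where k: "k < d" "j = w!k" using len by (auto simp: in_set_conv_nth)
      have "R0 d N w (Suc i) j = (if i = k then 1 else 0)" using R0_red[OF w] i k by auto
      moreover have "x j j = 1 / s k" using inw tcw[OF k(1)] k unfolding x_def diagm_def by auto
      moreover have "R (Suc i) j = (if i = k then 1 else 0)" using R(3) i k by auto
      ultimately show ?thesis using snz[OF i] by auto
    next
      case big
      then have "\<not> allowed w i j" "j \<noteq> w!i" unfolding allowed_def by auto
      then have "R0 d N w (Suc i) j = 0" unfolding R0_entry[OF w i] by simp
      moreover have "R (Suc i) j = 0" using R(5)[OF i] big by auto
      ultimately show ?thesis by simp
    next
      case small
      then have al: "allowed w i j" "j \<noteq> w!i" unfolding allowed_def by auto
      then have r0: "R0 d N w (Suc i) j = 1" unfolding R0_entry[OF w i] by simp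
      have xj: "x j j = tc j" using small unfolding x_def diagm_def by auto
      show ?thesis
      proof (cases "j \<le> d")
        case True
        then have jq: "j = q" using quni small by auto
        then have "tc j = 1" using q(3) unfolding tc_def by auto
        moreover have "s i = R (Suc i) q" using small jq unfolding s_def by auto
        ultimately show ?thesis using r0 xj jq by simp
      next
        case False
        then have "d < w!i" using small by auto
        then have "\<not> Suc i < d" using tor by (metis not_le)
        then have id: "i = d - 1" "Suc i = d" using i by auto
        have "j \<noteq> q" using False q by auto
        moreover have "j < ell" using small id unfolding ell_def by simp
        ultimately have "tc j = R d j / s (d-1)" using False small unfolding tc_def by auto
        then show ?thesis using r0 xj id snz[OF i] by simp
      qed
    qed
  qed
  define sg where "sg i = s (i - 1)" for i
  have "rowsp d A = rowsp d R" using R(1) by simp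
  also have "\<dots> = rowsp d (\<lambda>i j. sg i * (R0 d N w i j * x j j))"
  proof (rule rowsp_cong)
    fix i assume i: "i \<in> {1..d}"
    then have "i - 1 < d" "Suc (i - 1) = i" by auto
    then show "R i = (\<lambda>j. sg i * (R0 d N w i j * x j j))" using key[of "i-1"] unfolding sg_def by auto
  qed
  also have "\<dots> = rowsp d (\<lambda>i j. R0 d N w i j * x j j)"
    by (rule rowsp_rowscale) (use snz in \<open>auto simp: sg_def\<close>)
  finally show ?thesis using xt by blast
qed

lemma toric_in_orb:
  assumes w: "w \<in> I_seq d N" and tor: "\<forall>i. Suc i < d \<longrightarrow> w!i \<le> d"
    and q: "1 \<le> q" "q \<le> d" "q \<notin> set w" and quni: "\<forall>j. 1 \<le> j \<longrightarrow> j \<le> d \<longrightarrow> j \<notin> set w \<longrightarrow> j = q"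
    and A: "A \<in> frames d N" and Pc: "Pcf d N w (pl d A)" and Po: "Pof d N w (pl d A)"
  shows "rowsp d A \<in> (\<lambda>t. mat_act N t (rowsp d (R0 d N w))) ` torus N"
proof -
  obtain x where x: "x \<in> torus N" "rowsp d A = rowsp d (\<lambda>i j. R0 d N w i j * x j j)"
    using toric_orbit[OF w tor q quni A Pc Po] by blast
  have "mat_act N x (rowsp d (R0 d N w)) = rowsp d A"
    unfolding x(2) by (rule torus_act[OF x(1)]) (rule R0_box[OF w])
  then show ?thesis using x(1) by (metis image_eqI)
qed

lemma Ag_Pcf_all: "g \<in> borel N \<Longrightarrow> w \<in> I_seq d N \<Longrightarrow> Pcf d N w (pl d (Ag d g w))"
  unfolding Pcf_def using Ag_Pcf by blast

lemma toric_dense_pt: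
  assumes w: "w \<in> I_seq d N" and tor: "\<forall>i. Suc i < d \<longrightarrow> w!i \<le> d"
    and q: "1 \<le> q" "q \<le> d" "q \<notin> set w" and quni: "\<forall>j. 1 \<le> j \<longrightarrow> j \<le> d \<longrightarrow> j \<notin> set w \<longrightarrow> j = q"
    and g: "g \<in> borel N"
  shows "rowsp d (Ag d g w) \<in> (grass_top d N) closure_of ((\<lambda>t. mat_act N t (rowsp d (R0 d N w))) ` torus N)"
proof -
  let ?Orb = "(\<lambda>t. mat_act N t (rowsp d (R0 d N w))) ` torus N"
  let ?A = "Ag d g w"
  have len: "length w = d" using Iseq_len[OF w] .
  have A: "?A \<in> frames d N" using Ag_frame[OF g w] .
  obtain R where R: "rowsp d R = rowsp d ?A" "R \<in> frames d N"
    "\<forall>i k. i<d \<longrightarrow> k<d \<longrightarrow> R (Suc i) (w!k) = (if i = k then 1 else 0)"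
    "\<And>i j. \<not>(1\<le>i \<and> i\<le>d \<and> 1\<le>j \<and> j\<le>N) \<Longrightarrow> R i j = 0"
    "\<And>i j. i < d \<Longrightarrow> 1 \<le> j \<Longrightarrow> j \<le> N \<Longrightarrow> w!i < j \<Longrightarrow> R (Suc i) j = 0"
    "\<And>i j. i < d \<Longrightarrow> pl d ?A (w[i:=j]) \<noteq> 0 \<Longrightarrow> R (Suc i) j \<noteq> 0"
    by (rule chart_entries[OF w A Ag_Pcf_all[OF g w] Ag_pl_w[OF g w]]) blast
  define Z where "Z i j = (if 1 \<le> i \<and> i \<le> d \<and> j \<le> N \<and> allowed w (i-1) j \<and> R i j = 0 then (1::complex) else 0)" for i j
  define Rs where "Rs s = (\<lambda>i j. R i j + s * Z i j)" for s :: complex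
  have Rs0: "Rs 0 = R" unfolding Rs_def by simp
  have inorb: "Rs s \<in> frames d N \<and> rowsp d (Rs s) \<in> ?Orb" if s: "s \<noteq> 0" for s
  proof -
    have red: "\<forall>i k. i<d \<longrightarrow> k<d \<longrightarrow> Rs s (Suc i) (w!k) = (if i = k then 1 else 0)"
    proof (intro allI impI)
      fix i k assume ik: "i < d" "k < d"
      have "\<not> allowed w i (w!k)" using ik len unfolding allowed_def by auto
      then have "Z (Suc i) (w!k) = 0" unfolding Z_def by auto
      then show "Rs s (Suc i) (w!k) = (if i = k then 1 else 0)" using R(3) ik unfolding Rs_def by simp
    qed
    have box: "Rs s i j = 0" if "\<not>(1\<le>i \<and> i\<le>d \<and> 1\<le>j \<and> j\<le>N)" for i j
    proof -
      have "Z i j = 0" using that unfolding Z_def allowed_def by auto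
      then show ?thesis using R(4)[OF that] unfolding Rs_def by simp
    qed
    have plw: "pl d (Rs s) w = 1" by (rule pl_reduced_w[OF red])
    have ent: "pl d (Rs s) (w[i:=j]) = Rs s (Suc i) j" if "i < d" for i j
      by (rule pl_reduced[OF red that len])
    have fr: "Rs s \<in> frames d N" using frame_of_pl[of d N "Rs s" w] box plw by auto
    have Pc: "Pcf d N w (pl d (Rs s))" unfolding Pcf_def
    proof (intro allI impI)
      fix i j assume h: "i < d" "1 \<le> j \<and> j \<le> N \<and> w!i < j"
      then have "Z (Suc i) j = 0" unfolding Z_def allowed_def by auto
      then show "pl d (Rs s) (w[i:=j]) = 0" using ent[OF h(1)] R(5)[OF h(1)] h(2) unfolding Rs_def by simp
    qed
    have Po: "Pof d N w (pl d (Rs s))" unfolding Pof_def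
    proof (intro conjI allI impI)
      show "pl d (Rs s) w \<noteq> 0" using plw by simp
    next
      fix i j assume h: "i < d" "j \<le> N \<and> allowed w i j"
      show "pl d (Rs s) (w[i:=j]) \<noteq> 0"
      proof (cases "R (Suc i) j = 0")
        case True
        then have "Z (Suc i) j = 1" using h unfolding Z_def by auto
        then show ?thesis using ent[OF h(1)] True s unfolding Rs_def by simp
      next
        case False
        then have "Z (Suc i) j = 0" unfolding Z_def by auto
        then show ?thesis using ent[OF h(1)] False unfolding Rs_def by simp
      qed
    qed
    show ?thesis using fr toric_in_orb[OF w tor q quni fr Pc Po] by simp
  qed
  have cont: "continuous_on UNIV Rs"
    unfolding Rs_def
    by (intro continuous_on_coordinatewise_then_product continuous_on_add continuous_on_mult continuous_on_const continuous_on_id)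
  show ?thesis unfolding in_closure_of
  proof (intro conjI allI impI)
    show "rowsp d ?A \<in> topspace (grass_top d N)" unfolding topspace_grass using rowsp_grass[OF A] .
  next
    fix T assume T: "rowsp d ?A \<in> T \<and> openin (grass_top d N) T"
    then have "openin (top_of_set (frames d N)) {B \<in> frames d N. rowsp d B \<in> T}"
      unfolding openin_grass by simp
    then obtain U where U: "open U" "{B \<in> frames d N. rowsp d B \<in> T} = frames d N \<inter> U"
      unfolding openin_open by blast
    have "R \<in> {B \<in> frames d N. rowsp d B \<in> T}" using R(1,2) T by simp
    then have "R \<in> U" unfolding U(2) by simp
    then have z: "0 \<in> Rs -` U" using Rs0 by simp
    have "open (Rs -` U)" using open_vimage[OF U(1) cont] .
    then have "\<forall>x\<in>Rs -` U. \<exists>e>0. ball x e \<subseteq> Rs -` U" unfolding open_contains_ball .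
    then have "\<exists>e>0. ball 0 e \<subseteq> Rs -` U" using z by (rule bspec)
    then obtain e where e: "e > 0" "ball 0 e \<subseteq> Rs -` U" by blast
    define s where "s = complex_of_real (e/2)"
    have "s \<in> ball 0 e" using e(1) unfolding s_def by (simp add: dist_norm)
    then have sU: "Rs s \<in> U" using e(2) by blast
    have snz: "s \<noteq> 0" using e(1) unfolding s_def by simp
    have "rowsp d (Rs s) \<in> ?Orb" "Rs s \<in> frames d N" using inorb[OF snz] by auto
    moreover have "Rs s \<in> {B \<in> frames d N. rowsp d B \<in> T}" unfolding U(2) using sU \<open>Rs s \<in> frames d N\<close> by simp
    ultimately show "\<exists>y. y \<in> ?Orb \<and> y \<in> T" by auto
  qed
qed

lemma toric_spherical:
  assumes w: "w \<in> I_seq d N" and tor: "\<forall>i. Suc i < d \<longrightarrow> w!i \<le> d"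
    and q: "1 \<le> q" "q \<le> d" "q \<notin> set w" and quni: "\<forall>j. 1 \<le> j \<longrightarrow> j \<le> d \<longrightarrow> j \<notin> set w \<longrightarrow> j = q"
  shows "T_spherical w d N"
proof -
  let ?X = "schubert w d N"
  let ?V0 = "rowsp d (R0 d N w)"
  let ?Orb = "(\<lambda>t. mat_act N t ?V0) ` torus N"
  let ?O = "rowsp d ` {A \<in> frames d N. Pof d N w (pl d A)}"
  let ?Cb = "rowsp d ` {A \<in> frames d N. \<not> Pcf d N w (pl d A)}"
  have len: "length w = d" using Iseq_len[OF w] .
  have V0X: "?V0 \<in> ?X" unfolding R0_def by (rule schubert_contains[OF g0_borel[OF w] w])
  have Oop: "openin (grass_top d N) ?O" by (rule open_pl_set[OF Pof_open Pof_scinv])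
  have Cbop: "openin (grass_top d N) ?Cb" by (rule open_pl_set[OF nPcf_open nPcf_scinv])
  have Cbsub: "?Cb \<subseteq> grass d N" using rowsp_grass by auto
  have "grass d N - (grass d N - ?Cb) = ?Cb" using Cbsub by blast
  then have closed: "closedin (grass_top d N) (grass d N - ?Cb)"
    unfolding closedin_def topspace_grass using Cbop by simp
  have BC: "(\<lambda>g. mat_act N g (e_pt w)) ` borel N \<subseteq> grass d N - ?Cb"
  proof
    fix V assume "V \<in> (\<lambda>g. mat_act N g (e_pt w)) ` borel N"
    then obtain g where g: "g \<in> borel N" "V = mat_act N g (e_pt w)" by blast
    then have V: "V = rowsp d (Ag d g w)" using gew[OF w] by simp
    have "V \<notin> ?Cb"
    proof
      assume "V \<in> ?Cb"
      then have "\<not> Pcf d N w (pl d (Ag d g w))"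
        using rowsp_in_pl_set[OF Ag_frame[OF g(1) w] _ nPcf_scinv] V by simp
      then show False using Ag_Pcf_all[OF g(1) w] by simp
    qed
    then show "V \<in> grass d N - ?Cb" using V rowsp_grass[OF Ag_frame[OF g(1) w]] by simp
  qed
  have XC: "?X \<subseteq> grass d N - ?Cb" unfolding schubert_def by (rule closure_of_minimal[OF BC closed])
  have xnz: "x j j \<noteq> 0" if "x \<in> torus N" "1 \<le> j" "j \<le> N" for x j
    using borel_diag[OF torus_borel[OF that(1)] that(2,3)] .
  have orbX: "?Orb \<subseteq> ?X"
  proof
    fix V assume "V \<in> ?Orb"
    then obtain x where x: "x \<in> torus N" "V = mat_act N x ?V0" by blast
    have gb: "(\<lambda>j k. x j j * g0 N w j k) \<in> borel N"
      by (rule scale_borel[OF g0_borel[OF w]]) (rule xnz[OF x(1)])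
    have "V = rowsp d (\<lambda>i j. R0 d N w i j * x j j)" using x torus_act[OF x(1) R0_box[OF w]] by simp
    also have "(\<lambda>i j. R0 d N w i j * x j j) = Ag d (\<lambda>j k. x j j * g0 N w j k) w"
      unfolding R0_def Ag_def by (intro ext) (simp add: mult.commute)
    finally show "V \<in> ?X" using schubert_contains[OF gb w] by simp
  qed
  have orbO: "?Orb \<subseteq> ?O"
  proof
    fix V assume "V \<in> ?Orb"
    then obtain x where x: "x \<in> torus N" "V = mat_act N x ?V0" by blast
    let ?B = "\<lambda>i j. R0 d N w i j * x j j"
    have V: "V = rowsp d ?B" using x torus_act[OF x(1) R0_box[OF w]] by simp
    have Bf: "?B \<in> frames d N" by (rule scale_frame[OF R0_frame[OF w]]) (rule xnz[OF x(1)])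
    have wtnz: "wt d (\<lambda>j. x j j) I \<noteq> 0" if "\<forall>b<d. 1 \<le> I!b \<and> I!b \<le> N" for I
    proof -
      have "\<forall>b\<in>{0..<d}. x (I!b) (I!b) \<noteq> 0" using that xnz[OF x(1)] by simp
      then show ?thesis unfolding wt_def by simp
    qed
    have red: "\<forall>i k. i<d \<longrightarrow> k<d \<longrightarrow> R0 d N w (Suc i) (w!k) = (if i = k then 1 else 0)"
      by (rule R0_red[OF w])
    have "Pof d N w (pl d ?B)" unfolding Pof_def pl_scale_wt
    proof (intro conjI allI impI)
      have "wt d (\<lambda>j. x j j) w \<noteq> 0" by (rule wtnz) (use Iseq_range[OF w] in auto)
      then show "pl d (R0 d N w) w * wt d (\<lambda>j. x j j) w \<noteq> 0" using pl_reduced_w[OF red] by simp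
    next
      fix i j assume i: "i < d" and h: "j \<le> N \<and> allowed w i j"
      have "j \<noteq> w!i" "1 \<le> j" using h i len unfolding allowed_def by auto
      then have "pl d (R0 d N w) (w[i:=j]) = 1" using pl_reduced[OF red i len] R0_entry[OF w i] h by simp
      moreover have "wt d (\<lambda>j. x j j) (w[i:=j]) \<noteq> 0"
      proof (rule wtnz, intro allI impI)
        fix b assume "b < d"
        then show "1 \<le> w[i:=j]!b \<and> w[i:=j]!b \<le> N"
          using Iseq_range[OF w, of b] h \<open>1 \<le> j\<close> len by (cases "b = i") auto
      qed
      ultimately show "pl d (R0 d N w) (w[i:=j]) * wt d (\<lambda>j. x j j) (w[i:=j]) \<noteq> 0" by simp
    qed
    then show "V \<in> ?O" unfolding V using Bf by (intro imageI) simp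
  qed
  have open_orb: "openin (subtopology (grass_top d N) ?X) ?Orb"
    unfolding openin_subtopology
  proof (intro exI conjI)
    show "openin (grass_top d N) ?O" by (rule Oop)
    show "?Orb = ?O \<inter> ?X"
    proof (intro equalityI subsetI)
      fix V assume "V \<in> ?Orb" then show "V \<in> ?O \<inter> ?X" using orbO orbX by blast
    next
      fix V assume h: "V \<in> ?O \<inter> ?X"
      then obtain A where A: "A \<in> frames d N" "Pof d N w (pl d A)" "V = rowsp d A" by blast
      have nc: "V \<notin> ?Cb" using h XC by blast
      have "Pcf d N w (pl d A)"
      proof (rule ccontr)
        assume "\<not> Pcf d N w (pl d A)"
        then have "V \<in> ?Cb" using A(1,3) by blast
        then show False using nc by simp
      qed
      then show "V \<in> ?Orb" using toric_in_orb[OF w tor q quni A(1) _ A(2)] A(3) by simp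
    qed
  qed
  have dense: "?X \<subseteq> (grass_top d N) closure_of ?Orb"
    unfolding schubert_def
  proof (rule closure_of_minimal[OF _ closedin_closure_of])
    show "(\<lambda>g. mat_act N g (e_pt w)) ` borel N \<subseteq> (grass_top d N) closure_of ?Orb"
    proof
      fix V assume "V \<in> (\<lambda>g. mat_act N g (e_pt w)) ` borel N"
      then obtain g where g: "g \<in> borel N" "V = mat_act N g (e_pt w)" by blast
      then show "V \<in> (grass_top d N) closure_of ?Orb" using toric_dense_pt[OF w tor q quni g(1)] gew[OF w] by simp
    qed
  qed
  show ?thesis unfolding T_spherical_def Let_def
    by (rule bexI[OF _ V0X]) (rule conjI[OF open_orb dense])
qed

lemma Iseq_gap: assumes w: "w \<in> I_seq d N" and ik: "i \<le> k" "k < d"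
  shows "w!i + (k - i) \<le> w!k"
  using ik
proof (induction k)
  case 0
  then show ?case by simp
next
  case (Suc k)
  show ?case
  proof (cases "i = Suc k")
    case True then show ?thesis by simp
  next
    case False
    then have "i \<le> k" using Suc.prems by simp
    then have "w!i + (k - i) \<le> w!k" using Suc.IH Suc.prems by simp
    moreover have "w!k < w!(Suc k)" using Iseq_mono[OF w, of k "Suc k"] Suc.prems by simp
    ultimately show ?thesis using \<open>i \<le> k\<close> by (simp add: Suc_diff_le)
  qed
qed

lemma Iseq_lower: assumes w: "w \<in> I_seq d N" and i: "i < d" shows "Suc i \<le> w!i"
  using Iseq_gap[OF w _ i, of 0] Iseq_range[OF w, of 0] i by simp

lemma red_p_props: assumes w: "w \<in> I_seq d N" and ne: "w \<noteq> [1..<d+1]"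
  shows "red_p w < d" "\<forall>i<red_p w. w!i = Suc i" "Suc (Suc (red_p w)) \<le> w!(red_p w)"
proof -
  have len: "length w = d" using Iseq_len[OF w] .
  let ?P = "\<lambda>p. p \<le> length w \<and> (\<forall>i<p. w ! i = i + 1)"
  have ex: "?P 0" by simp
  have bd: "\<forall>p. ?P p \<longrightarrow> p \<le> d" using len by simp
  have P: "?P (red_p w)" unfolding red_p_def by (rule GreatestI_nat[of ?P 0 d]) (use bd ex in auto)
  have mx: "\<And>p. ?P p \<Longrightarrow> p \<le> red_p w" unfolding red_p_def
  proof -
    fix p assume "?P p"
    then show "p \<le> (GREATEST p. ?P p)" by (rule Greatest_le_nat[of ?P p d]) (use bd in auto)
  qed
  show all: "\<forall>i<red_p w. w!i = Suc i" using P by simp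
  show lt: "red_p w < d"
  proof (rule ccontr)
    assume "\<not> red_p w < d"
    then have "\<forall>i<d. w!i = Suc i" using P len by auto
    then have "w = [1..<d+1]" using len by (intro nth_equalityI) (auto simp del: upt_Suc)
    then show False using ne by simp
  qed
  have "w!(red_p w) \<noteq> Suc (red_p w)"
  proof
    assume h: "w!(red_p w) = Suc (red_p w)"
    have "?P (Suc (red_p w))" using P h lt len by (auto simp: less_Suc_eq)
    then show False using mx by fastforce
  qed
  then show "Suc (Suc (red_p w)) \<le> w!(red_p w)" using Iseq_lower[OF w lt] by simp
qed

lemma last_dm1: assumes w: "w \<in> I_seq d N" and d: "1 \<le> d" shows "last w = w!(d-1)"
proof -
  have "w \<noteq> []" using Iseq_len[OF w] d by auto
  then show ?thesis using Iseq_len[OF w] by (simp add: last_conv_nth)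
qed

lemma big_last: assumes w: "w \<in> I_seq d N" and ne: "w \<noteq> [1..<d+1]" and d: "1 \<le> d"
  shows "d < w!(d-1)"
proof (rule ccontr)
  assume "\<not> d < w!(d-1)"
  then have h: "w!(d-1) \<le> d" by simp
  have "w!i = Suc i" if "i < d" for i
  proof -
    have "w!i + (d - 1 - i) \<le> w!(d-1)" using Iseq_gap[OF w, of i "d-1"] that by simp
    then show ?thesis using Iseq_lower[OF w that] h that by simp
  qed
  then have "w = [1..<d+1]" using Iseq_len[OF w] by (intro nth_equalityI) (auto simp del: upt_Suc)
  then show False using ne by simp
qed

lemma rhs_iff_tor:
  assumes w: "w \<in> I_seq d N" and ne: "w \<noteq> [1..<d+1]" and d: "1 \<le> d"
  shows "((red_d w = 1 \<and> red_w w = [red_N w]) \<or>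
     (red_d w \<ge> 2 \<and> red_w w = [2..<red_d w + 1] @ [red_N w])) \<longleftrightarrow> (\<forall>i. Suc i < d \<longrightarrow> w!i \<le> d)"
proof -
  have len: "length w = d" using Iseq_len[OF w] .
  define p where "p = red_p w"
  have plt: "p < d" and pre: "\<forall>i<p. w!i = Suc i" and pw: "Suc (Suc p) \<le> w!p"
    using red_p_props[OF w ne] unfolding p_def by auto
  have rd: "red_d w = d - p" unfolding red_d_def p_def len ..
  have rN: "red_N w = w!(d-1) - p" unfolding red_N_def p_def last_dm1[OF w d] ..
  have rwl: "length (red_w w) = d - p" unfolding red_w_def p_def using len by simp
  have rwn: "red_w w ! k = w!(p+k) - p" if "k < d - p" for k
    unfolding red_w_def p_def[symmetric] using that len by simp
  show ?thesis
  proof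
    assume rhs: "(red_d w = 1 \<and> red_w w = [red_N w]) \<or> (red_d w \<ge> 2 \<and> red_w w = [2..<red_d w + 1] @ [red_N w])"
    show "\<forall>i. Suc i < d \<longrightarrow> w!i \<le> d"
    proof (intro allI impI)
      fix i assume i: "Suc i < d"
      show "w!i \<le> d"
      proof (cases "i < p")
        case True then show ?thesis using pre i by simp
      next
        case False
        then have ip: "p \<le> i" by simp
        from rhs show ?thesis
        proof
          assume "red_d w = 1 \<and> red_w w = [red_N w]"
          then show ?thesis using rd i ip by arith
        next
          assume h: "red_d w \<ge> 2 \<and> red_w w = [2..<red_d w + 1] @ [red_N w]"
          define k where "k = i - p"
          have k: "k < d - p - 1" using i ip unfolding k_def by simp
          have "red_w w ! k = [2..<red_d w + 1] ! k" using h k rd by (simp add: nth_append)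
          also have "\<dots> = k + 2" using k rd by (simp del: upt_Suc)
          finally have "w!(p+k) - p = k + 2" using rwn[of k] k by simp
          moreover have "p + k = i" using ip unfolding k_def by simp
          ultimately show ?thesis using i by simp
        qed
      qed
    qed
  next
    assume tor: "\<forall>i. Suc i < d \<longrightarrow> w!i \<le> d"
    show "(red_d w = 1 \<and> red_w w = [red_N w]) \<or> (red_d w \<ge> 2 \<and> red_w w = [2..<red_d w + 1] @ [red_N w])"
    proof (cases "d - p = 1")
      case True
      then have "red_w w = [red_w w ! 0]" using rwl by (cases "red_w w") auto
      moreover have "red_w w ! 0 = red_N w"
      proof -
        have "p = d - 1" using True plt by simp
        then show ?thesis using rwn[of 0] True rN by simp
      qed
      ultimately show ?thesis using True rd by simp
    next
      case False
      then have dp2: "d - p \<ge> 2" using plt by simp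
      have "red_w w = [2..<red_d w + 1] @ [red_N w]"
      proof (rule nth_equalityI)
        show "length (red_w w) = length ([2..<red_d w + 1] @ [red_N w])" using rwl rd dp2 by simp
      next
        fix k assume "k < length (red_w w)"
        then have k: "k < d - p" using rwl by simp
        show "red_w w ! k = ([2..<red_d w + 1] @ [red_N w]) ! k"
        proof (cases "k < d - p - 1")
          case True
          have lo: "w!p + k \<le> w!(p+k)" using Iseq_gap[OF w, of p "p+k"] k by simp
          have "Suc (d-2) < d" using dp2 by simp
          then have hi0: "w!(d-2) \<le> d" using tor by blast
          have "w!(p+k) + (d - 2 - (p+k)) \<le> w!(d-2)" using Iseq_gap[OF w, of "p+k" "d-2"] True dp2 by simp
          then have "w!(p+k) = p + k + 2" using lo pw hi0 True by simp
          moreover have "([2..<red_d w + 1] @ [red_N w]) ! k = k + 2"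
            using True rd dp2 by (simp add: nth_append del: upt_Suc)
          ultimately show ?thesis using rwn[OF k] by simp
        next
          case False
          then have "k = d - p - 1" using k by simp
          moreover have "p + (d - p - 1) = d - 1" using plt by simp
          moreover have "length [2..<red_d w + 1] = d - p - 1" using rd dp2 by simp
          ultimately have "([2..<red_d w + 1] @ [red_N w]) ! k = red_N w"
            by (metis nth_append_length)
          moreover have "red_w w ! k = red_N w" using rwn[OF k] rN \<open>k = d - p - 1\<close> \<open>p + (d - p - 1) = d - 1\<close> by simp
          ultimately show ?thesis by simp
        qed
      qed
      then show ?thesis using dp2 rd by simp
    qed
  qed
qed

lemma tor_q:
  assumes w: "w \<in> I_seq d N" and ne: "w \<noteq> [1..<d+1]" and d: "1 \<le> d"
    and tor: "\<forall>i. Suc i < d \<longrightarrow> w!i \<le> d"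
  obtains q where "1 \<le> q" "q \<le> d" "q \<notin> set w" "\<forall>j. 1 \<le> j \<longrightarrow> j \<le> d \<longrightarrow> j \<notin> set w \<longrightarrow> j = q"
proof -
  have len: "length w = d" using Iseq_len[OF w] .
  have big: "d < w!(d-1)" using big_last[OF w ne d] .
  have S: "{1..d} \<inter> set w = (\<lambda>i. w!i) ` {0..<d-1}"
  proof (intro equalityI subsetI)
    fix j assume "j \<in> {1..d} \<inter> set w"
    then obtain i where i: "i < d" "j = w!i" "j \<le> d" using len by (auto simp: in_set_conv_nth)
    have "i \<noteq> d - 1" using i big by auto
    then have "i \<in> {0..<d-1}" using i by auto
    then show "j \<in> (\<lambda>i. w!i) ` {0..<d-1}" using i by blast
  next
    fix j assume "j \<in> (\<lambda>i. w!i) ` {0..<d-1}"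
    then obtain i where i: "i < d - 1" "j = w!i" by auto
    then have "w!i \<le> d" using tor by auto
    moreover have "1 \<le> w!i" using Iseq_range[OF w, of i] i by auto
    moreover have "w!i \<in> set w" using i len by auto
    ultimately show "j \<in> {1..d} \<inter> set w" using i by auto
  qed
  have inj: "inj_on (\<lambda>i. w!i) {0..<d-1}" unfolding inj_on_def using Iseq_inj[OF w] by auto
  have cS: "card ({1..d} \<inter> set w) = d - 1" unfolding S using card_image[OF inj] by simp
  have M: "{1..d} - set w = {1..d} - ({1..d} \<inter> set w)" by blast
  have "card ({1..d} - ({1..d} \<inter> set w)) = card {1..d} - card ({1..d} \<inter> set w)"
    by (rule card_Diff_subset) auto
  then have "card ({1..d} - set w) = d - (d - 1)" unfolding M cS by simp
  then have "card ({1..d} - set w) = 1" using d by simp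
  then obtain q where q: "{1..d} - set w = {q}" by (rule card_1_singletonE)
  have qin: "q \<in> {1..d} - set w" unfolding q by simp
  show ?thesis
  proof (rule that)
    show "1 \<le> q" "q \<le> d" "q \<notin> set w" using qin by simp_all
    show "\<forall>j. 1 \<le> j \<longrightarrow> j \<le> d \<longrightarrow> j \<notin> set w \<longrightarrow> j = q"
    proof (intro allI impI)
      fix j assume "1 \<le> j" "j \<le> d" "j \<notin> set w"
      then have "j \<in> {1..d} - set w" by simp
      then show "j = q" unfolding q by simp
    qed
  qed
qed

lemma ntor_data:
  assumes w: "w \<in> I_seq d N" and ntor: "\<not> (\<forall>i. Suc i < d \<longrightarrow> w!i \<le> d)"
  obtains i1 q q' where "i1 < d - 1" "d - 1 < d" "d < w!i1" "1 \<le> q" "q \<le> d" "q \<notin> set w"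
    "1 \<le> q'" "q' \<le> d" "q' \<notin> set w" "q \<noteq> q'"
proof -
  have len: "length w = d" using Iseq_len[OF w] .
  obtain i1 where i1: "Suc i1 < d" "d < w!i1" using ntor by auto
  have S: "{1..d} \<inter> set w \<subseteq> (\<lambda>k. w!k) ` {0..<i1}"
  proof
    fix j assume "j \<in> {1..d} \<inter> set w"
    then obtain k where k: "k < d" "j = w!k" "j \<le> d" using len by (auto simp: in_set_conv_nth)
    have "k < i1"
    proof (rule ccontr)
      assume "\<not> k < i1"
      then have "w!i1 \<le> w!k" using Iseq_mono[OF w, of i1 k] k by (cases "k = i1") auto
      then show False using k i1 by simp
    qed
    then show "j \<in> (\<lambda>k. w!k) ` {0..<i1}" using k by auto
  qed
  have "card ({1..d} \<inter> set w) \<le> card ((\<lambda>k. w!k) ` {0..<i1})" by (rule card_mono[OF _ S]) simp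
  also have "\<dots> \<le> i1" using card_image_le[of "{0..<i1}" "\<lambda>k. w!k"] by simp
  finally have cS: "card ({1..d} \<inter> set w) \<le> i1" .
  have M: "{1..d} - set w = {1..d} - ({1..d} \<inter> set w)" by blast
  have "card ({1..d} - ({1..d} \<inter> set w)) = card {1..d} - card ({1..d} \<inter> set w)"
    by (rule card_Diff_subset) auto
  then have "card ({1..d} - set w) = d - card ({1..d} \<inter> set w)" unfolding M by simp
  then have cM: "card ({1..d} - set w) \<ge> 2" using cS i1 by simp
  then have "{1..d} - set w \<noteq> {}" by (metis card.empty not_numeral_le_zero)
  then obtain q where q: "q \<in> {1..d} - set w" by blast
  have "card (({1..d} - set w) - {q}) \<ge> 1" using cM q by simp
  then have "({1..d} - set w) - {q} \<noteq> {}" by (metis card.empty not_one_le_zero)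
  then obtain q' where q': "q' \<in> ({1..d} - set w) - {q}" by blast
  show ?thesis by (rule that[of i1 q q']) (use i1 q q' in auto)
qed

theorem proposition6p1:
  fixes w :: "nat list" and d N :: nat
  assumes "1 \<le> d" and "d < N"
    and "w \<in> I_seq d N"
    and "w \<noteq> [1..<d+1]"
  shows "T_spherical w d N \<longleftrightarrow>
    ((red_d w = 1 \<and> red_w w = [red_N w]) \<or>
     (red_d w \<ge> 2 \<and> red_w w = [2..<red_d w + 1] @ [red_N w]))"
proof -
  note w = assms(3) and ne = assms(4) and d = assms(1)
  show ?thesis
  proof (cases "\<forall>i. Suc i < d \<longrightarrow> w!i \<le> d")
    case True
    obtain q where q: "1 \<le> q" "q \<le> d" "q \<notin> set w" "\<forall>j. 1 \<le> j \<longrightarrow> j \<le> d \<longrightarrow> j \<notin> set w \<longrightarrow> j = q"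
      by (rule tor_q[OF w ne d True])
    have "T_spherical w d N" by (rule toric_spherical[OF w True q])
    then show ?thesis using rhs_iff_tor[OF w ne d] True by simp
  next
    case False
    obtain i1 q q' where h: "i1 < d - 1" "d - 1 < d" "d < w!i1" "1 \<le> q" "q \<le> d" "q \<notin> set w"
      "1 \<le> q'" "q' \<le> d" "q' \<notin> set w" "q \<noteq> q'"
      by (rule ntor_data[OF w False])
    have "\<not> T_spherical w d N" by (rule not_spherical[OF w h])
    then show ?thesis using rhs_iff_tor[OF w ne d] False by simp
  qed
qed

end
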